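(* For each $i\in\{0,\dots,\tau-1\}$, the total complexity (total number of break points) of all lower envelopes $L_1,\dots,L_m$ restricted to $[t_i,t_{i+1}]$ is $O(n^2)$.
   Context: Entities of a set $\mathcal{X}$ of size $n$ move in $\mathbb{R}^1$ along piecewise-linear trajectories with vertices at common times $t_0<\dots<t_\tau$; $\varepsilon>0$ is fixed; trajectories are in general position (no three meet at one point at the same time, no two pairs are at distance exactly $\varepsilon$ at the same time). $\mathcal{I}(t)=(\max_\sigma\sigma(t)+\min_\sigma\sigma(t))/2$. Two entities are $\varepsilon$-connected at time $t$ if they are joined by a chain of entities with consecutive distances at most $\varepsilon$ at time $t$. At each time, $\mathcal{X}$ is partitioned into $\varepsilon$-connectivity classes; let $(\mathcal{X}_1,J_1),\dots,(\mathcal{X}_m,J_m)$ be all pairs where $J_j$ is a maximal time interval during which $\mathcal{X}_j$ is one of these classes at every time. Let $f_\sigma(t)=|\sigma(t)-\mathcal{I}(t)|$ and $L_j$ the lower envelope of $\{f_\sigma:\sigma\in\mathcal{X}_j\}$ restricted to $J_j$. A break point of $L_j$ is a triple $(t,\sigma,\psi)$, $\sigma\neq\psi\in\mathcal{X}_j$, $t\in J_j$, with $L_j(t)=f_\sigma(t)=f_\psi(t)$. *)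

theory Defs
  imports Complex_Main
begin

definition entities :: "nat \<Rightarrow> nat set" where
  "entities n = {..<n}"

definition time_vertices_ok :: "(nat \<Rightarrow> real) \<Rightarrow> nat \<Rightarrow> bool" where
  "time_vertices_ok tv tau \<longleftrightarrow> (\<forall>k<tau. tv k < tv (Suc k))"

definition piecewise_linear_traj ::
  "nat \<Rightarrow> (nat \<Rightarrow> real \<Rightarrow> real) \<Rightarrow> (nat \<Rightarrow> real) \<Rightarrow> nat \<Rightarrow> bool" where
  "piecewise_linear_traj n traj tv tau \<longleftrightarrow>
     (\<forall>s\<in>entities n. \<forall>k<tau. \<exists>a b. \<forall>x\<in>{tv k..tv (Suc k)}. traj s x = a * x + b)"

definition general_position ::
  "nat \<Rightarrow> (nat \<Rightarrow> real \<Rightarrow> real) \<Rightarrow> (nat \<Rightarrow> real) \<Rightarrow> nat \<Rightarrow> real \<Rightarrow> bool" where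
  "general_position n traj tv tau eps \<longleftrightarrow>
     (\<forall>x\<in>{tv 0..tv tau}.
        (\<forall>a\<in>entities n. \<forall>b\<in>entities n. \<forall>c\<in>entities n.
           a \<noteq> b \<and> b \<noteq> c \<and> a \<noteq> c \<longrightarrow> \<not> (traj a x = traj b x \<and> traj b x = traj c x)) \<and>
        (\<forall>a\<in>entities n. \<forall>b\<in>entities n. \<forall>c\<in>entities n. \<forall>d\<in>entities n.
           a \<noteq> b \<and> c \<noteq> d \<and> {a, b} \<noteq> {c, d} \<longrightarrow>
           \<not> (\<bar>traj a x - traj b x\<bar> = eps \<and> \<bar>traj c x - traj d x\<bar> = eps)))"

definition centre :: "nat \<Rightarrow> (nat \<Rightarrow> real \<Rightarrow> real) \<Rightarrow> real \<Rightarrow> real" where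
  "centre n traj x = (Max ((\<lambda>s. traj s x) ` entities n) + Min ((\<lambda>s. traj s x) ` entities n)) / 2"

definition eps_connected ::
  "nat \<Rightarrow> (nat \<Rightarrow> real \<Rightarrow> real) \<Rightarrow> real \<Rightarrow> real \<Rightarrow> nat \<Rightarrow> nat \<Rightarrow> bool" where
  "eps_connected n traj eps x a b \<longleftrightarrow>
     a \<in> entities n \<and> b \<in> entities n \<and>
     (a, b) \<in> {(p, q). p \<in> entities n \<and> q \<in> entities n \<and> \<bar>traj p x - traj q x\<bar> \<le> eps}\<^sup>*"

definition conn_classes ::
  "nat \<Rightarrow> (nat \<Rightarrow> real \<Rightarrow> real) \<Rightarrow> real \<Rightarrow> real \<Rightarrow> nat set set" where
  "conn_classes n traj eps x = {{b. eps_connected n traj eps x a b} | a. a \<in> entities n}"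

definition is_real_interval :: "real set \<Rightarrow> bool" where
  "is_real_interval J \<longleftrightarrow> (\<forall>a\<in>J. \<forall>b\<in>J. {a..b} \<subseteq> J)"

definition component_pair ::
  "nat \<Rightarrow> (nat \<Rightarrow> real \<Rightarrow> real) \<Rightarrow> (nat \<Rightarrow> real) \<Rightarrow> nat \<Rightarrow> real \<Rightarrow> nat set \<Rightarrow> real set \<Rightarrow> bool" where
  "component_pair n traj tv tau eps A J \<longleftrightarrow>
     J \<noteq> {} \<and> is_real_interval J \<and> J \<subseteq> {tv 0..tv tau} \<and>
     (\<forall>x\<in>J. A \<in> conn_classes n traj eps x) \<and>
     (\<forall>J'. J \<subseteq> J' \<and> is_real_interval J' \<and> J' \<subseteq> {tv 0..tv tau} \<and>
           (\<forall>x\<in>J'. A \<in> conn_classes n traj eps x) \<longrightarrow> J' = J)"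

definition fdist :: "nat \<Rightarrow> (nat \<Rightarrow> real \<Rightarrow> real) \<Rightarrow> nat \<Rightarrow> real \<Rightarrow> real" where
  "fdist n traj s x = \<bar>traj s x - centre n traj x\<bar>"

definition lower_env :: "nat \<Rightarrow> (nat \<Rightarrow> real \<Rightarrow> real) \<Rightarrow> nat set \<Rightarrow> real \<Rightarrow> real" where
  "lower_env n traj A x = Min ((\<lambda>s. fdist n traj s x) ` A)"

definition break_points ::
  "nat \<Rightarrow> (nat \<Rightarrow> real \<Rightarrow> real) \<Rightarrow> nat set \<Rightarrow> real set \<Rightarrow> (real \<times> nat \<times> nat) set" where
  "break_points n traj A J =
     {(x, s, p). x \<in> J \<and> s \<in> A \<and> p \<in> A \<and> s \<noteq> p \<and>
        lower_env n traj A x = fdist n traj s x \<and> fdist n traj s x = fdist n traj p x}"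

text \<open>All break points of all lower envelopes L_1..L_m restricted to [tv i, tv (i+1)],
  each tagged with the pair (X_j, J_j) it belongs to (so the cardinality is the total count).\<close>
definition segment_break_points ::
  "nat \<Rightarrow> (nat \<Rightarrow> real \<Rightarrow> real) \<Rightarrow> (nat \<Rightarrow> real) \<Rightarrow> nat \<Rightarrow> real \<Rightarrow> nat
     \<Rightarrow> ((nat set \<times> real set) \<times> (real \<times> nat \<times> nat)) set" where
  "segment_break_points n traj tv tau eps i =
     {((A, J), (x, s, p)). component_pair n traj tv tau eps A J \<and>
        (x, s, p) \<in> break_points n traj A J \<and> x \<in> {tv i..tv (Suc i)}}"

end

theory Submission
  imports Defs
begin



definition Mx :: "'a set \<Rightarrow> ('a \<Rightarrow> real) \<Rightarrow> ('a \<Rightarrow> real) \<Rightarrow> real \<Rightarrow> real" where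
  "Mx E al be y = Max ((\<lambda>q. al q * y + be q) ` E)"

definition VM :: "'a set \<Rightarrow> ('a \<Rightarrow> real) \<Rightarrow> ('a \<Rightarrow> real) \<Rightarrow> real set" where
  "VM E al be = {t. \<exists>u\<in>E. \<exists>v\<in>E. al u * t + be u = Mx E al be t \<and> al v * t + be v = Mx E al be t \<and> al u \<noteq> al v}"

lemma Mx_ge: "finite E \<Longrightarrow> q \<in> E \<Longrightarrow> al q * y + be q \<le> Mx E al be y"
  unfolding Mx_def by (rule Max_ge) auto

lemma Mx_attained: "finite E \<Longrightarrow> E \<noteq> {} \<Longrightarrow> \<exists>q\<in>E. al q * y + be q = Mx E al be y"
proof -
  assume "finite E" "E \<noteq> {}"
  then have "Mx E al be y \<in> (\<lambda>q. al q * y + be q) ` E" unfolding Mx_def by (intro Max_in) auto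
  then show ?thesis by auto
qed

lemma argmax_mono:
  assumes "finite E" "u \<in> E" "v \<in> E" "al u * c + be u = Mx E al be c" "al v * d + be v = Mx E al be d" "c < d"
  shows "al u \<le> al v"
proof -
  have 1: "al v * c + be v \<le> al u * c + be u" using Mx_ge[OF assms(1) assms(3), of al c be] assms(4) by simp
  have 2: "al u * d + be u \<le> al v * d + be v" using Mx_ge[OF assms(1) assms(2), of al d be] assms(5) by simp
  from 1 2 have "(al v - al u) * (d - c) \<ge> 0" by (simp add: algebra_simps)
  with assms(6) show ?thesis by (simp add: zero_le_mult_iff)
qed

lemma VM_finite_card:
  assumes fin: "finite E"
  shows "finite (VM E al be) \<and> card (VM E al be) \<le> card E"
proof -
  define mins where "mins t = Min {al u | u. u \<in> E \<and> al u * t + be u = Mx E al be t}" for t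
  have key: "mins t < mins t'" if "t \<in> VM E al be" "t' \<in> VM E al be" "t < t'" for t t'
  proof -
    from that(1) obtain u v where uv: "u\<in>E" "v\<in>E" "al u * t + be u = Mx E al be t" "al v * t + be v = Mx E al be t" "al u \<noteq> al v"
      unfolding VM_def by blast
    from that(2) obtain u' where u': "u'\<in>E" "al u' * t' + be u' = Mx E al be t'" unfolding VM_def by blast
    have fs: "finite {al u | u. u \<in> E \<and> al u * t + be u = Mx E al be t}" using fin by auto
    have fs': "finite {al u | u. u \<in> E \<and> al u * t' + be u = Mx E al be t'}" using fin by auto
    have m1: "mins t \<le> al u" "mins t \<le> al v" unfolding mins_def using uv fs by (auto intro!: Min_le)
    have "mins t' \<in> {al u | u. u \<in> E \<and> al u * t' + be u = Mx E al be t'}"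
      unfolding mins_def using fs' u' by (intro Min_in) auto
    then obtain w where w: "w \<in> E" "al w * t' + be w = Mx E al be t'" "mins t' = al w" by auto
    have "al u \<le> al w" "al v \<le> al w" using argmax_mono[OF fin _ w(1) _ w(2) that(3)] uv by auto
    then show ?thesis using m1 uv(5) w(3) by linarith
  qed
  have inj: "inj_on mins (VM E al be)"
    by (rule inj_onI) (metis key linorder_neqE_linordered_idom order_less_irrefl)
  have sub: "mins ` VM E al be \<subseteq> al ` E"
  proof
    fix z assume "z \<in> mins ` VM E al be"
    then obtain t where t: "t \<in> VM E al be" "z = mins t" by auto
    then obtain u where u: "u \<in> E" "al u * t + be u = Mx E al be t" unfolding VM_def by blast
    have "mins t \<in> {al u | u. u \<in> E \<and> al u * t + be u = Mx E al be t}"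
      unfolding mins_def using fin u by (intro Min_in) auto
    then show "z \<in> al ` E" using t by auto
  qed
  have fi: "finite (mins ` VM E al be)" using sub fin finite_subset by blast
  have "finite (VM E al be)" using finite_imageD[OF fi inj] .
  moreover have "card (VM E al be) \<le> card E"
    using card_image[OF inj] card_mono[OF _ sub] card_image_le[OF fin, of al] fin by fastforce
  ultimately show ?thesis by blast
qed

lemma ex_argmax_ext:
  assumes "finite E" "E \<noteq> {}"
  shows "\<exists>u\<in>E. al u * c + be u = Mx E al be c \<and> (\<forall>w\<in>E. al w * c + be w = Mx E al be c \<longrightarrow> al w \<le> al u)"
    "\<exists>u\<in>E. al u * c + be u = Mx E al be c \<and> (\<forall>w\<in>E. al w * c + be w = Mx E al be c \<longrightarrow> al u \<le> al w)"
proof -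
  define W where "W = {w\<in>E. al w * c + be w = Mx E al be c}"
  have fW: "finite W" "W \<noteq> {}" using assms Mx_attained[OF assms, of al c be] unfolding W_def by auto
  have "Max (al ` W) \<in> al ` W" using fW by (intro Max_in) auto
  then obtain u where "u \<in> W" "al u = Max (al ` W)" by auto
  then show "\<exists>u\<in>E. al u * c + be u = Mx E al be c \<and> (\<forall>w\<in>E. al w * c + be w = Mx E al be c \<longrightarrow> al w \<le> al u)"
    using fW unfolding W_def by (metis (mono_tags, lifting) Max_ge finite_imageI image_eqI mem_Collect_eq)
  have "Min (al ` W) \<in> al ` W" using fW by (intro Min_in) auto
  then obtain u' where "u' \<in> W" "al u' = Min (al ` W)" by auto
  then show "\<exists>u\<in>E. al u * c + be u = Mx E al be c \<and> (\<forall>w\<in>E. al w * c + be w = Mx E al be c \<longrightarrow> al u \<le> al w)"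
    using fW unfolding W_def by (metis (mono_tags, lifting) Min_le finite_imageI image_eqI mem_Collect_eq)
qed

lemma VM_gap:
  assumes fin: "finite E"
    and "c < d" "u \<in> E" "al u * c + be u = Mx E al be c"
    "\<forall>w\<in>E. al w * c + be w = Mx E al be c \<longrightarrow> al w \<le> al u"
    "v \<in> E" "al v * d + be v = Mx E al be d"
    "\<forall>w\<in>E. al w * d + be w = Mx E al be d \<longrightarrow> al v \<le> al w" "al u < al v"
  shows "\<exists>t. c < t \<and> t < d \<and> t \<in> VM E al be"
  using assms(2-)
proof (induction "card {q\<in>E. al u \<le> al q \<and> al q \<le> al v}" arbitrary: d v rule: less_induct)
  case (less v d)
  note hyp = less.prems
  have Ene: "E \<noteq> {}" using hyp(2) by auto
  define t where "t = (be u - be v) / (al v - al u)"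
  have tuv: "al u * t + be u = al v * t + be v" using hyp(8) unfolding t_def by (simp add: field_simps)
  have vc: "al v * c + be v < al u * c + be u"
  proof -
    have "al v * c + be v \<le> al u * c + be u" using Mx_ge[OF fin hyp(5)] hyp(3) by metis
    moreover have "al v * c + be v \<noteq> al u * c + be u"
      using hyp(4,5,8,3) by fastforce
    ultimately show ?thesis by simp
  qed
  have ud: "al u * d + be u < al v * d + be v"
  proof -
    have "al u * d + be u \<le> al v * d + be v" using Mx_ge[OF fin hyp(2)] hyp(6) by metis
    moreover have "al u * d + be u \<noteq> al v * d + be v"
      using hyp(2,6,7,8) by fastforce
    ultimately show ?thesis by simp
  qed
  have ct: "c < t"
  proof -
    have "(al v - al u) * t - (al v - al u) * c > 0" using tuv vc by (simp add: algebra_simps)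
    then have "(al v - al u) * (t - c) > 0" by (simp add: algebra_simps)
    with hyp(8) show ?thesis by (simp add: zero_less_mult_iff)
  qed
  have td: "t < d"
  proof -
    have "(al v - al u) * d - (al v - al u) * t > 0" using tuv ud by (simp add: algebra_simps)
    then have "(al v - al u) * (d - t) > 0" by (simp add: algebra_simps)
    with hyp(8) show ?thesis by (simp add: zero_less_mult_iff)
  qed
  obtain w where w: "w \<in> E" "al w * t + be w = Mx E al be t"
    "\<forall>w'\<in>E. al w' * t + be w' = Mx E al be t \<longrightarrow> al w \<le> al w'"
    using ex_argmax_ext(2)[OF fin Ene, of al t be] by blast
  show ?case
  proof (cases "al u * t + be u = Mx E al be t")
    case True
    then have "t \<in> VM E al be" unfolding VM_def using hyp(2,5,8) tuv by (intro CollectI bexI[of _ u] bexI[of _ v]) auto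
    then show ?thesis using ct td by auto
  next
    case False
    have ut: "al u * t + be u < al w * t + be w" using False w(2) Mx_ge[OF fin hyp(2), of al t be] by linarith
    have uw: "al u \<le> al w" using argmax_mono[OF fin hyp(2) w(1) hyp(3) w(2) ct] .
    have uw': "al u \<noteq> al w"
    proof
      assume eq: "al u = al w"
      have "al w * c + be w \<le> al u * c + be u" using Mx_ge[OF fin w(1)] hyp(3) by metis
      with eq ut show False by (simp add: algebra_simps)
    qed
    have wv: "al w \<le> al v" using argmax_mono[OF fin w(1) hyp(5) w(2) hyp(6) td] .
    have wv': "al w \<noteq> al v"
    proof
      assume eq: "al w = al v"
      have "al w * d + be w \<le> al v * d + be v" using Mx_ge[OF fin w(1)] hyp(6) by metis
      with eq ut tuv show False by (simp add: algebra_simps)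
    qed
    have sub: "{q\<in>E. al u \<le> al q \<and> al q \<le> al w} \<subset> {q\<in>E. al u \<le> al q \<and> al q \<le> al v}"
      using wv wv' hyp(5,8) by force
    have lt: "card {q\<in>E. al u \<le> al q \<and> al q \<le> al w} < card {q\<in>E. al u \<le> al q \<and> al q \<le> al v}"
      using psubset_card_mono[OF _ sub] fin by auto
    obtain t' where "c < t'" "t' < t" "t' \<in> VM E al be"
      using less.hyps[OF lt ct hyp(2,3,4) w(1,2,3)] uw uw' by force
    then show ?thesis using td by auto
  qed
qed

lemma Mx_affine:
  assumes fin: "finite E" and ne: "E \<noteq> {}" and cd: "c \<le> d" and free: "VM E al be \<inter> {c<..<d} = {}"
  shows "\<exists>k m. \<forall>y\<in>{c..d}. Mx E al be y = k * y + m"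
proof (cases "c = d")
  case True
  then show ?thesis by (intro exI[of _ 0] exI[of _ "Mx E al be c"]) auto
next
  case False
  then have cd': "c < d" using cd by simp
  obtain u where u: "u \<in> E" "al u * c + be u = Mx E al be c"
    "\<forall>w\<in>E. al w * c + be w = Mx E al be c \<longrightarrow> al w \<le> al u"
    using ex_argmax_ext(1)[OF fin ne] by blast
  obtain v where v: "v \<in> E" "al v * d + be v = Mx E al be d"
    "\<forall>w\<in>E. al w * d + be w = Mx E al be d \<longrightarrow> al v \<le> al w"
    using ex_argmax_ext(2)[OF fin ne] by blast
  have le: "al u \<le> al v" using argmax_mono[OF fin u(1) v(1) u(2) v(2) cd'] .
  have eq: "al u = al v"
  proof (rule ccontr)
    assume "al u \<noteq> al v"
    then have "al u < al v" using le by simp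
    then obtain t where "c < t" "t < d" "t \<in> VM E al be" using VM_gap[OF fin cd' u v] by blast
    with free show False by auto
  qed
  have bu: "be u = be v"
  proof -
    have "al v * c + be v \<le> al u * c + be u" using Mx_ge[OF fin v(1)] u(2) by metis
    moreover have "al u * d + be u \<le> al v * d + be v" using Mx_ge[OF fin u(1)] v(2) by metis
    ultimately show ?thesis using eq by simp
  qed
  have "Mx E al be y = al u * y + be u" if y: "y \<in> {c..d}" for y
  proof (rule antisym)
    show "al u * y + be u \<le> Mx E al be y" using Mx_ge[OF fin u(1)] .
    have "Mx E al be y \<in> (\<lambda>q. al q * y + be q) ` E" unfolding Mx_def using fin ne by (intro Max_in) auto
    then obtain q where q: "q \<in> E" "Mx E al be y = al q * y + be q" by auto
    have q1: "al q * c + be q \<le> al u * c + be u" using Mx_ge[OF fin q(1)] u(2) by metis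
    have q2: "al q * d + be q \<le> al u * d + be u" using Mx_ge[OF fin q(1)] v(2) eq bu by metis
    define lam where "lam = (y - c) / (d - c)"
    have dc: "d - c > 0" using cd' by simp
    have lam: "0 \<le> lam" "lam \<le> 1" using y dc unfolding lam_def by (auto simp: field_simps)
    have "lam * (d - c) = y - c" unfolding lam_def using dc by simp
    then have lam3: "y = (1 - lam) * c + lam * d" by (simp add: algebra_simps)
    have "al q * y + be q - (al u * y + be u) = (1 - lam) * ((al q * c + be q) - (al u * c + be u)) + lam * ((al q * d + be q) - (al u * d + be u))"
      unfolding lam3 by (simp add: algebra_simps)
    also have "\<dots> \<le> 0" using q1 q2 lam(1,2) by (intro add_nonpos_nonpos mult_nonneg_nonpos) auto
    finally show "Mx E al be y \<le> al u * y + be u" using q(2) by simp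
  qed
  then show ?thesis by blast
qed




lemma affine_ivt:
  fixes k m x y :: real
  assumes "x \<le> y" "(k*x+m)*(k*y+m) \<le> 0"
  shows "\<exists>t\<in>{x..y}. k*t+m = 0"
proof (cases "k = 0")
  case True
  then have "m * m \<le> 0" using assms by simp
  then have "m = 0" by (metis mult_eq_0_iff not_square_less_zero order_le_less)
  then show ?thesis using True assms by auto
next
  case False
  define t where "t = - m / k"
  have t0: "k*t+m = 0" using False unfolding t_def by simp
  have "k*(t-x) = -(k*x+m)" "k*(y-t) = k*y+m" using t0 by (simp_all add: algebra_simps)
  then have "(k*(t-x))*(k*(y-t)) \<ge> 0" using assms(2) by (metis mult_minus_left neg_0_le_iff_le)
  then have "(k*k)*((t-x)*(y-t)) \<ge> 0" by (simp add: algebra_simps)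
  moreover have "k*k > 0" using False not_real_square_gt_zero by blast
  ultimately have p: "(t-x)*(y-t) \<ge> 0" by (simp add: zero_le_mult_iff)
  have "x \<le> t \<and> t \<le> y"
  proof (rule ccontr)
    assume "\<not> (x \<le> t \<and> t \<le> y)"
    then have "t < x \<or> y < t" by auto
    then have "(t-x)*(y-t) < 0" using assms(1) by (auto simp: mult_less_0_iff)
    with p show False by simp
  qed
  then show ?thesis using t0 by auto
qed

lemma Min_neg_Max:
  fixes f :: "'a \<Rightarrow> real"
  assumes "finite E" "E \<noteq> {}"
  shows "Min (f ` E) = - Max ((\<lambda>q. - f q) ` E)"
proof -
  have "Max ((\<lambda>q. - f q) ` E) \<in> (\<lambda>q. - f q) ` E" using assms by (intro Max_in) auto
  then obtain q where q: "q \<in> E" "Max ((\<lambda>q. - f q) ` E) = - f q" by auto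
  have "Min (f ` E) \<in> f ` E" using assms by (intro Min_in) auto
  then obtain r where r: "r \<in> E" "Min (f ` E) = f r" by auto
  have "Min (f ` E) \<le> f q" using assms q by (intro Min_le) auto
  moreover have "- f r \<le> Max ((\<lambda>q. - f q) ` E)" using assms r by (intro Max_ge) auto
  ultimately show ?thesis using q r by linarith
qed

lemma tv_mono: "time_vertices_ok tv tau \<Longrightarrow> j \<le> k \<Longrightarrow> k \<le> tau \<Longrightarrow> tv j \<le> tv k"
proof (induction k)
  case 0 then show ?case by simp
next
  case (Suc k)
  show ?case
  proof (cases "j = Suc k")
    case True then show ?thesis by simp
  next
    case False
    then have "tv j \<le> tv k" using Suc by auto
    also have "tv k < tv (Suc k)" using Suc.prems unfolding time_vertices_ok_def by auto
    finally show ?thesis by simp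
  qed
qed

locale seg =
  fixes n :: nat and traj :: "nat \<Rightarrow> real \<Rightarrow> real" and tv :: "nat \<Rightarrow> real" and tau :: nat
    and eps :: real and i :: nat and al be :: "nat \<Rightarrow> real"
  assumes eps: "eps > 0" and tvok: "time_vertices_ok tv tau"
    and gp: "general_position n traj tv tau eps" and itau: "i < tau"
    and finS: "finite (segment_break_points n traj tv tau eps i)"
    and lin: "\<And>s x. s < n \<Longrightarrow> x \<in> {tv i..tv (Suc i)} \<Longrightarrow> traj s x = al s * x + be s"
begin

abbreviation "a \<equiv> tv i"
abbreviation "b \<equiv> tv (Suc i)"
definition "E = {..<n}"
definition pos :: "nat \<Rightarrow> real \<Rightarrow> real" where "pos s x = al s * x + be s"
definition "Ic x = (Mx E al be x + Min ((\<lambda>q. al q * x + be q) ` E)) / 2"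
abbreviation "S \<equiv> segment_break_points n traj tv tau eps i"
definition "B = snd ` S"
definition "fd s x = \<bar>pos s x - Ic x\<bar>"

lemma ab: "a < b" using tvok itau unfolding time_vertices_ok_def by auto
lemma dom: "tv 0 \<le> a" "b \<le> tv tau" using tv_mono[OF tvok] itau by auto
lemma finE: "finite E" unfolding E_def by simp
lemma cardE: "card E = n" unfolding E_def by simp
lemma entE: "entities n = E" unfolding E_def entities_def by simp

lemma traj_pos: "s \<in> E \<Longrightarrow> x \<in> {a..b} \<Longrightarrow> traj s x = pos s x"
  using lin unfolding E_def pos_def by auto

lemma centre_Ic: "x \<in> {a..b} \<Longrightarrow> centre n traj x = Ic x"
proof -
  assume x: "x \<in> {a..b}"
  have "(\<lambda>s. traj s x) ` entities n = (\<lambda>q. al q * x + be q) ` E"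
    unfolding entE using traj_pos[OF _ x] unfolding pos_def by (intro image_cong) auto
  then show ?thesis unfolding centre_def Ic_def Mx_def by simp
qed

lemma fdist_fd: "s \<in> E \<Longrightarrow> x \<in> {a..b} \<Longrightarrow> fdist n traj s x = fd s x"
  unfolding fdist_def fd_def using centre_Ic traj_pos by simp

lemma Ic_alt: "E \<noteq> {} \<Longrightarrow> Ic x = (Mx E al be x - Mx E (\<lambda>q. - al q) (\<lambda>q. - be q) x) / 2"
  unfolding Ic_def Mx_def using Min_neg_Max[OF finE, of "\<lambda>q. al q * x + be q"] by simp

lemma gp3: "x \<in> {a..b} \<Longrightarrow> u \<in> E \<Longrightarrow> v \<in> E \<Longrightarrow> w \<in> E \<Longrightarrow> u \<noteq> v \<Longrightarrow> v \<noteq> w \<Longrightarrow> u \<noteq> w \<Longrightarrow>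
   pos u x = pos v x \<Longrightarrow> pos v x = pos w x \<Longrightarrow> False"
proof -
  assume x: "x \<in> {a..b}" and h: "u \<in> E" "v \<in> E" "w \<in> E" "u \<noteq> v" "v \<noteq> w" "u \<noteq> w"
    "pos u x = pos v x" "pos v x = pos w x"
  have xd: "x \<in> {tv 0..tv tau}" using x dom by auto
  have "\<not> (traj u x = traj v x \<and> traj v x = traj w x)"
    using conjunct1[OF bspec[OF gp[unfolded general_position_def] xd], unfolded entE, rule_format, of u v w] h by auto
  then show False using h traj_pos[OF _ x] by simp
qed

lemma gp_eps: "x \<in> {a..b} \<Longrightarrow> u \<in> E \<Longrightarrow> v \<in> E \<Longrightarrow> w \<in> E \<Longrightarrow> z \<in> E \<Longrightarrow> u \<noteq> v \<Longrightarrow> w \<noteq> z \<Longrightarrow> {u,v} \<noteq> {w,z} \<Longrightarrow>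
   \<bar>pos u x - pos v x\<bar> = eps \<Longrightarrow> \<bar>pos w x - pos z x\<bar> = eps \<Longrightarrow> False"
proof -
  assume x: "x \<in> {a..b}" and h: "u \<in> E" "v \<in> E" "w \<in> E" "z \<in> E" "u \<noteq> v" "w \<noteq> z" "{u,v} \<noteq> {w,z}"
    "\<bar>pos u x - pos v x\<bar> = eps" "\<bar>pos w x - pos z x\<bar> = eps"
  have xd: "x \<in> {tv 0..tv tau}" using x dom by auto
  have "\<not> (\<bar>traj u x - traj v x\<bar> = eps \<and> \<bar>traj w x - traj z x\<bar> = eps)"
    using conjunct2[OF bspec[OF gp[unfolded general_position_def] xd], unfolded entE, rule_format, OF h(1-4) conjI[OF h(5) conjI[OF h(6,7)]]] .
  then show False using h(8,9) traj_pos[OF h(1) x] traj_pos[OF h(2) x] traj_pos[OF h(3) x] traj_pos[OF h(4) x] by simp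
qed

lemma three_of_card:
  assumes "finite A" "2 < card A"
  shows "\<exists>u v w. u \<in> A \<and> v \<in> A \<and> w \<in> A \<and> u \<noteq> v \<and> v \<noteq> w \<and> u \<noteq> w"
proof -
  have "A \<noteq> {}" using assms(2) by (intro notI) simp
  then obtain u where u: "u \<in> A" by blast
  have c1: "card (A - {u}) = card A - 1" using card_Diff_singleton[OF u] .
  have "A - {u} \<noteq> {}"
  proof
    assume h: "A - {u} = {}" have "card A - 1 = 0" using c1 unfolding h by simp
    then show False using assms(2) by simp
  qed
  then obtain v where v: "v \<in> A - {u}" by blast
  have c2: "card (A - {u} - {v}) = card A - 2" using card_Diff_singleton[OF v] c1 by simp
  have "A - {u} - {v} \<noteq> {}"
  proof
    assume h: "A - {u} - {v} = {}" have "card A - 2 = 0" using c2 unfolding h by simp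
    then show False using assms(2) by simp
  qed
  then obtain w where w: "w \<in> A - {u} - {v}" by blast
  show ?thesis using u v w by blast
qed

lemma card_le2:
  assumes "x \<in> {a..b}"
  shows "card {q\<in>E. pos q x = c} \<le> 2"
proof (rule ccontr)
  assume "\<not> ?thesis"
  then have c: "2 < card {q\<in>E. pos q x = c}" by simp
  have f: "finite {q\<in>E. pos q x = c}" using finE by simp
  obtain u v w where "u \<in> {q\<in>E. pos q x = c}" "v \<in> {q\<in>E. pos q x = c}" "w \<in> {q\<in>E. pos q x = c}"
    "u \<noteq> v" "v \<noteq> w" "u \<noteq> w"
    using three_of_card[OF f c] by blast
  then show False using gp3[OF assms, of u v w] by simp
qed

end



lemma interval_cc: "is_real_interval {c..d::real}"
  unfolding is_real_interval_def by auto

lemma interval_Un: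
  assumes J: "is_real_interval J" and K: "is_real_interval K" and x: "x \<in> J" "x \<in> K"
  shows "is_real_interval (J \<union> K)"
  unfolding is_real_interval_def
proof (intro ballI subsetI)
  fix p q z assume p: "p \<in> J \<union> K" and q: "q \<in> J \<union> K" and z: "z \<in> {p..q}"
  have JJ: "\<And>u v. u \<in> J \<Longrightarrow> v \<in> J \<Longrightarrow> {u..v} \<subseteq> J" using J unfolding is_real_interval_def by blast
  have KK: "\<And>u v. u \<in> K \<Longrightarrow> v \<in> K \<Longrightarrow> {u..v} \<subseteq> K" using K unfolding is_real_interval_def by blast
  show "z \<in> J \<union> K"
  proof (cases "z \<le> x")
    case True
    then have "z \<in> {p..x}" using z by simp
    then show ?thesis using p JJ[OF _ x(1)] KK[OF _ x(2)] by blast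
  next
    case False
    then have "z \<in> {x..q}" using z by simp
    then show ?thesis using q JJ[OF x(1)] KK[OF x(2)] by blast
  qed
qed

context seg begin

abbreviation "Rel x \<equiv> {(p, q). p \<in> entities n \<and> q \<in> entities n \<and> \<bar>traj p x - traj q x\<bar> \<le> eps}"

lemma Rel_sym: "sym (Rel x)"
  unfolding sym_def by (auto simp: abs_minus_commute)

lemma Rel_E: "(p, q) \<in> (Rel x)\<^sup>* \<Longrightarrow> p \<in> E \<Longrightarrow> q \<in> E"
  by (induction rule: rtrancl_induct) (auto simp: entE)

lemma Rel_sym_rt: "(p, q) \<in> (Rel x)\<^sup>* \<Longrightarrow> (q, p) \<in> (Rel x)\<^sup>*"
  using sym_rtrancl[OF Rel_sym[of x]] unfolding sym_def by blast

lemma class_E: "A \<in> conn_classes n traj eps x \<Longrightarrow> A \<subseteq> E"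
  unfolding conn_classes_def eps_connected_def entE by auto

lemma class_mem:
  assumes A: "A \<in> conn_classes n traj eps x" and s: "s \<in> A"
  shows "A = {c. c \<in> E \<and> (s, c) \<in> (Rel x)\<^sup>*}"
proof -
  obtain r where r: "r \<in> E" "A = {c. eps_connected n traj eps x r c}"
    using A unfolding conn_classes_def entE by auto
  have rs: "(r, s) \<in> (Rel x)\<^sup>*" "s \<in> E" using s r unfolding eps_connected_def entE by auto
  show ?thesis
  proof (intro set_eqI iffI)
    fix c assume "c \<in> A"
    then have "(r, c) \<in> (Rel x)\<^sup>*" "c \<in> E" using r unfolding eps_connected_def entE by auto
    then show "c \<in> {c. c \<in> E \<and> (s, c) \<in> (Rel x)\<^sup>*}"
      using rtrancl_trans[OF Rel_sym_rt[OF rs(1)]] by simp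
  next
    fix c assume "c \<in> {c. c \<in> E \<and> (s, c) \<in> (Rel x)\<^sup>*}"
    then have "(s, c) \<in> (Rel x)\<^sup>*" "c \<in> E" by auto
    then have "(r, c) \<in> (Rel x)\<^sup>*" using rtrancl_trans[OF rs(1)] by simp
    then show "c \<in> A" using r \<open>c \<in> E\<close> unfolding eps_connected_def entE by simp
  qed
qed

lemma class_unique:
  "A \<in> conn_classes n traj eps x \<Longrightarrow> A' \<in> conn_classes n traj eps x \<Longrightarrow> s \<in> A \<Longrightarrow> s \<in> A' \<Longrightarrow> A = A'"
proof -
  assume h: "A \<in> conn_classes n traj eps x" "A' \<in> conn_classes n traj eps x" "s \<in> A" "s \<in> A'"
  show ?thesis using class_mem[OF h(1,3)] class_mem[OF h(2,4)] by simp
qed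

lemma class_closed:
  assumes "A \<in> conn_classes n traj eps x" "s \<in> A" "(s, c) \<in> (Rel x)\<^sup>*"
  shows "c \<in> A"
proof -
  have "s \<in> E" using class_E assms by auto
  then have "c \<in> E" using Rel_E assms(3) by auto
  then show ?thesis using class_mem[OF assms(1,2)] assms(3) by auto
qed

lemma classes_eq:
  assumes "Rel x = Rel y"
  shows "conn_classes n traj eps x = conn_classes n traj eps y"
  unfolding conn_classes_def eps_connected_def assms ..

lemma comp_class: "component_pair n traj tv tau eps A J \<Longrightarrow> x \<in> J \<Longrightarrow> A \<in> conn_classes n traj eps x"
  unfolding component_pair_def by auto

lemma comp_extend:
  assumes C: "component_pair n traj tv tau eps A J" and x: "x \<in> J" "x \<in> {c..d}"
    and dd: "{c..d} \<subseteq> {tv 0..tv tau}" and cl: "\<forall>y\<in>{c..d}. A \<in> conn_classes n traj eps y"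
  shows "{c..d} \<subseteq> J"
proof -
  have Ji: "is_real_interval J" "J \<subseteq> {tv 0..tv tau}" "\<forall>y\<in>J. A \<in> conn_classes n traj eps y"
    using C unfolding component_pair_def by auto
  have max: "\<And>J'. J \<subseteq> J' \<Longrightarrow> is_real_interval J' \<Longrightarrow> J' \<subseteq> {tv 0..tv tau} \<Longrightarrow>
           (\<forall>y\<in>J'. A \<in> conn_classes n traj eps y) \<Longrightarrow> J' = J"
    using C unfolding component_pair_def by blast
  have "J \<union> {c..d} = J"
    apply (rule max)
    using interval_Un[OF Ji(1) interval_cc x] Ji dd cl by auto
  then show ?thesis by blast
qed

lemma comp_unique:
  assumes C: "component_pair n traj tv tau eps A J" and C': "component_pair n traj tv tau eps A J'"
    and x: "x \<in> J" "x \<in> J'"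
  shows "J = J'"
proof -
  have Ji: "is_real_interval J" "J \<subseteq> {tv 0..tv tau}" "\<forall>y\<in>J. A \<in> conn_classes n traj eps y"
    using C unfolding component_pair_def by auto
  have Ji': "is_real_interval J'" "J' \<subseteq> {tv 0..tv tau}" "\<forall>y\<in>J'. A \<in> conn_classes n traj eps y"
    using C' unfolding component_pair_def by auto
  have max: "\<And>K. J \<subseteq> K \<Longrightarrow> is_real_interval K \<Longrightarrow> K \<subseteq> {tv 0..tv tau} \<Longrightarrow>
           (\<forall>y\<in>K. A \<in> conn_classes n traj eps y) \<Longrightarrow> K = J"
    using C unfolding component_pair_def by blast
  have max': "\<And>K. J' \<subseteq> K \<Longrightarrow> is_real_interval K \<Longrightarrow> K \<subseteq> {tv 0..tv tau} \<Longrightarrow>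
           (\<forall>y\<in>K. A \<in> conn_classes n traj eps y) \<Longrightarrow> K = J'"
    using C' unfolding component_pair_def by blast
  have u: "is_real_interval (J \<union> J')" using interval_Un[OF Ji(1) Ji'(1) x] .
  have "J \<union> J' = J" by (rule max) (use u Ji Ji' in auto)
  moreover have "J \<union> J' = J'" by (rule max') (use u Ji Ji' in auto)
  ultimately show ?thesis by simp
qed

lemma S_iff:
  "((A, J), (x, s, p)) \<in> S \<longleftrightarrow> component_pair n traj tv tau eps A J \<and> x \<in> J \<and> s \<in> A \<and> p \<in> A \<and> s \<noteq> p \<and>
     lower_env n traj A x = fdist n traj s x \<and> fdist n traj s x = fdist n traj p x \<and> x \<in> {a..b}"
  unfolding segment_break_points_def break_points_def by auto

lemma inj_S: "inj_on snd S"
proof (rule inj_onI)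
  fix u v assume u: "u \<in> S" and v: "v \<in> S" and eq: "snd u = snd v"
  obtain A J x s p where uu: "u = ((A, J), (x, s, p))" by (metis prod.collapse)
  obtain A' J' x' s' p' where vv: "v = ((A', J'), (x', s', p'))" by (metis prod.collapse)
  have e: "x' = x" "s' = s" "p' = p" using eq uu vv by auto
  have h: "component_pair n traj tv tau eps A J" "x \<in> J" "s \<in> A" using u uu S_iff by auto
  have h': "component_pair n traj tv tau eps A' J'" "x \<in> J'" "s \<in> A'" using v vv e S_iff by auto
  have "A = A'" using class_unique[OF comp_class[OF h(1,2)] comp_class[OF h'(1,2)] h(3) h'(3)] .
  moreover have "J = J'" using comp_unique[OF h(1) _ h(2)] h' calculation by auto
  ultimately show "u = v" using uu vv e by simp
qed

lemma finB: "finite B" unfolding B_def using finS by simp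
lemma cardB: "card S = card B" unfolding B_def using card_image[OF inj_S] by simp

lemma lower_env_fd:
  assumes A: "A \<in> conn_classes n traj eps x" and x: "x \<in> {a..b}"
  shows "lower_env n traj A x = Min ((\<lambda>q. fd q x) ` A)"
proof -
  have "A \<subseteq> E" using class_E[OF A] .
  then have "(\<lambda>s. fdist n traj s x) ` A = (\<lambda>q. fd q x) ` A" using fdist_fd[OF _ x] by (intro image_cong) auto
  then show ?thesis unfolding lower_env_def by simp
qed

lemma B_elim:
  assumes "(x, s, p) \<in> B"
  obtains A J where "component_pair n traj tv tau eps A J" "x \<in> J" "s \<in> A" "p \<in> A" "s \<noteq> p"
    "x \<in> {a..b}" "s \<in> E" "p \<in> E" "fd s x = fd p x" "\<forall>q\<in>A. fd s x \<le> fd q x"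
proof -
  obtain A J where h: "((A, J), (x, s, p)) \<in> S" using assms unfolding B_def by force
  then have h2: "component_pair n traj tv tau eps A J" "x \<in> J" "s \<in> A" "p \<in> A" "s \<noteq> p"
     "lower_env n traj A x = fdist n traj s x" "fdist n traj s x = fdist n traj p x" "x \<in> {a..b}"
    using S_iff by auto
  have A: "A \<in> conn_classes n traj eps x" using comp_class h2 by auto
  have AE: "A \<subseteq> E" using class_E[OF A] .
  have fA: "finite A" using AE finE finite_subset by blast
  have sp: "s \<in> E" "p \<in> E" using AE h2 by auto
  have eq: "fd s x = fd p x" using h2(7) fdist_fd[OF _ h2(8)] sp by simp
  have le: "\<forall>q\<in>A. fd s x \<le> fd q x"
  proof
    fix q assume q: "q \<in> A"
    have "Min ((\<lambda>q. fd q x) ` A) \<le> fd q x" using fA q by (intro Min_le) auto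
    then show "fd s x \<le> fd q x" using h2(6) lower_env_fd[OF A h2(8)] fdist_fd[OF sp(1) h2(8)] by simp
  qed
  show ?thesis using that h2 sp eq le by blast
qed

lemma B_intro:
  assumes C: "component_pair n traj tv tau eps A J" and h: "x \<in> J" "s \<in> A" "p \<in> A" "s \<noteq> p"
    "x \<in> {a..b}" "fd s x = fd p x" "\<forall>q\<in>A. fd s x \<le> fd q x"
  shows "(x, s, p) \<in> B"
proof -
  have A: "A \<in> conn_classes n traj eps x" using comp_class C h by auto
  have AE: "A \<subseteq> E" using class_E[OF A] .
  have fA: "finite A" using AE finE finite_subset by blast
  have sp: "s \<in> E" "p \<in> E" using AE h by auto
  have "Min ((\<lambda>q. fd q x) ` A) = fd s x"
    using fA h(2,7) by (intro Min_eqI) auto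
  then have "lower_env n traj A x = fdist n traj s x"
    using lower_env_fd[OF A h(5)] fdist_fd[OF sp(1) h(5)] by simp
  moreover have "fdist n traj s x = fdist n traj p x" using h(6) fdist_fd[OF _ h(5)] sp by simp
  ultimately have "((A, J), (x, s, p)) \<in> S" using S_iff C h by auto
  then show ?thesis unfolding B_def by force
qed

end



lemma tendsto_Max_fin:
  fixes f :: "'a \<Rightarrow> real \<Rightarrow> real"
  assumes "finite E" "E \<noteq> {}" "\<And>q. q \<in> E \<Longrightarrow> ((f q) \<longlongrightarrow> f q x) F"
  shows "((\<lambda>y. Max ((\<lambda>q. f q y) ` E)) \<longlongrightarrow> Max ((\<lambda>q. f q x) ` E)) F"
  using assms
proof (induction E rule: finite_ne_induct)
  case (singleton q)
  then show ?case by simp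
next
  case (insert q A)
  have eq: "\<And>z. Max ((\<lambda>r. f r z) ` insert q A) = max (f q z) (Max ((\<lambda>r. f r z) ` A))"
    using insert.hyps by (simp add: Max_insert)
  show ?case unfolding eq using insert by (intro tendsto_max) auto
qed

lemma tendsto_Min_fin:
  fixes f :: "'a \<Rightarrow> real \<Rightarrow> real"
  assumes "finite E" "E \<noteq> {}" "\<And>q. q \<in> E \<Longrightarrow> ((f q) \<longlongrightarrow> f q x) F"
  shows "((\<lambda>y. Min ((\<lambda>q. f q y) ` E)) \<longlongrightarrow> Min ((\<lambda>q. f q x) ` E)) F"
  using assms
proof (induction E rule: finite_ne_induct)
  case (singleton q)
  then show ?case by simp
next
  case (insert q A)
  have eq: "\<And>z. Min ((\<lambda>r. f r z) ` insert q A) = min (f q z) (Min ((\<lambda>r. f r z) ` A))"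
    using insert.hyps by (simp add: Min_insert)
  show ?case unfolding eq using insert by (intro tendsto_min) auto
qed

lemma affine_between:
  fixes k m x y z :: real
  assumes "x \<le> z" "z \<le> y"
  shows "k*z+m \<le> max (k*x+m) (k*y+m)" "min (k*x+m) (k*y+m) \<le> k*z+m"
proof -
  have "k*x \<le> k*z \<and> k*z \<le> k*y \<or> k*y \<le> k*z \<and> k*z \<le> k*x"
  proof (cases "k \<ge> 0")
    case True then show ?thesis using assms by (auto intro: mult_left_mono)
  next
    case False then show ?thesis using assms by (auto intro: mult_left_mono_neg)
  qed
  then show "k*z+m \<le> max (k*x+m) (k*y+m)" "min (k*x+m) (k*y+m) \<le> k*z+m" by auto
qed

context seg begin

definition "Coll = {t. \<exists>u\<in>E. \<exists>v\<in>E. al u \<noteq> al v \<and> pos u t = pos v t}"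
definition "Zeps = {t. \<exists>u\<in>E. \<exists>v\<in>E. al u \<noteq> al v \<and> pos u t - pos v t = eps}"
definition "V = VM E al be \<union> VM E (\<lambda>q. - al q) (\<lambda>q. - be q)"

lemma Coll_card: "finite Coll \<and> card Coll \<le> n^2"
proof -
  have sub: "Coll \<subseteq> (\<lambda>(u,v). (be v - be u) / (al u - al v)) ` (E \<times> E)"
  proof
    fix t assume "t \<in> Coll"
    then obtain u v where uv: "u \<in> E" "v \<in> E" "al u \<noteq> al v" "pos u t = pos v t" unfolding Coll_def by blast
    then have "t = (be v - be u) / (al u - al v)" unfolding pos_def by (simp add: field_simps)
    then show "t \<in> (\<lambda>(u,v). (be v - be u) / (al u - al v)) ` (E \<times> E)" using uv by force
  qed
  have f: "finite (E \<times> E)" using finE by simp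
  have "card Coll \<le> card (E \<times> E)" using order_trans[OF card_mono[OF finite_imageI[OF f] sub] card_image_le[OF f]] .
  then show ?thesis using finite_subset[OF sub finite_imageI[OF f]] cardE by (simp add: card_cartesian_product power2_eq_square)
qed

lemma Zeps_card: "finite Zeps \<and> card Zeps \<le> n^2"
proof -
  have sub: "Zeps \<subseteq> (\<lambda>(u,v). (eps + be v - be u) / (al u - al v)) ` (E \<times> E)"
  proof
    fix t assume "t \<in> Zeps"
    then obtain u v where uv: "u \<in> E" "v \<in> E" "al u \<noteq> al v" "pos u t - pos v t = eps" unfolding Zeps_def by blast
    then have "t = (eps + be v - be u) / (al u - al v)" unfolding pos_def by (simp add: field_simps)
    then show "t \<in> (\<lambda>(u,v). (eps + be v - be u) / (al u - al v)) ` (E \<times> E)" using uv by force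
  qed
  have f: "finite (E \<times> E)" using finE by simp
  have "card Zeps \<le> card (E \<times> E)" using order_trans[OF card_mono[OF finite_imageI[OF f] sub] card_image_le[OF f]] .
  then show ?thesis using finite_subset[OF sub finite_imageI[OF f]] cardE by (simp add: card_cartesian_product power2_eq_square)
qed

lemma V_card: "finite V \<and> card V \<le> 2 * n"
proof -
  have 1: "finite (VM E al be)" "card (VM E al be) \<le> n" using VM_finite_card[OF finE, of al be] cardE by auto
  have 2: "finite (VM E (\<lambda>q. - al q) (\<lambda>q. - be q))" "card (VM E (\<lambda>q. - al q) (\<lambda>q. - be q)) \<le> n"
    using VM_finite_card[OF finE, of "\<lambda>q. - al q" "\<lambda>q. - be q"] cardE by auto
  show ?thesis unfolding V_def using 1 2 card_Un_le[of "VM E al be" "VM E (\<lambda>q. - al q) (\<lambda>q. - be q)"] by auto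
qed

lemma Ic_affine:
  assumes ne: "E \<noteq> {}" and cd: "c \<le> d" and free: "V \<inter> {c<..<d} = {}"
  shows "\<exists>k m. \<forall>y\<in>{c..d}. Ic y = k * y + m"
proof -
  obtain k1 m1 where 1: "\<forall>y\<in>{c..d}. Mx E al be y = k1 * y + m1"
    using Mx_affine[OF finE ne cd, of al be] free unfolding V_def by blast
  obtain k2 m2 where 2: "\<forall>y\<in>{c..d}. Mx E (\<lambda>q. - al q) (\<lambda>q. - be q) y = k2 * y + m2"
    using Mx_affine[OF finE ne cd, of "\<lambda>q. - al q" "\<lambda>q. - be q"] free unfolding V_def by blast
  have "\<forall>y\<in>{c..d}. Ic y = ((k1 - k2)/2) * y + (m1 - m2)/2"
  proof
    fix y assume y: "y \<in> {c..d}"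
    have "Ic y = (k1 * y + m1 - (k2 * y + m2)) / 2" using 1 2 y Ic_alt[OF ne] by simp
    then show "Ic y = ((k1 - k2)/2) * y + (m1 - m2)/2" by (simp add: field_simps)
  qed
  then show ?thesis by blast
qed

lemma Ic_tendsto:
  assumes ne: "E \<noteq> {}"
  shows "(Ic \<longlongrightarrow> Ic x) (at x within X)"
proof -
  have t: "\<And>q. q \<in> E \<Longrightarrow> ((\<lambda>y. al q * y + be q) \<longlongrightarrow> al q * x + be q) (at x within X)"
    by (intro tendsto_intros)
  have "((\<lambda>y. (Max ((\<lambda>q. al q * y + be q) ` E) + Min ((\<lambda>q. al q * y + be q) ` E)) / 2) \<longlongrightarrow>
     (Max ((\<lambda>q. al q * x + be q) ` E) + Min ((\<lambda>q. al q * x + be q) ` E)) / 2) (at x within X)"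
    by (intro tendsto_intros tendsto_Max_fin[OF finE ne] tendsto_Min_fin[OF finE ne] t) auto
  then show ?thesis unfolding Ic_def Mx_def .
qed

lemma fd_tendsto:
  assumes ne: "E \<noteq> {}"
  shows "((\<lambda>y. fd q y) \<longlongrightarrow> fd q x) (at x within X)"
  unfolding fd_def pos_def by (intro tendsto_intros Ic_tendsto[OF ne, unfolded pos_def])

lemma pos_diff_affine: "pos u t - pos v t - c = (al u - al v) * t + (be u - be v - c)"
  unfolding pos_def by (simp add: algebra_simps)

lemma Rel_pos: "y \<in> {a..b} \<Longrightarrow> Rel y = {(p, q). p \<in> E \<and> q \<in> E \<and> \<bar>pos p y - pos q y\<bar> \<le> eps}"
  using traj_pos unfolding entE by auto

lemma no_cross_eps:
  assumes xy: "x \<le> y" and Z: "Zeps \<inter> {x..y} = {}" and uv: "u \<in> E" "v \<in> E" "al u \<noteq> al v"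
  shows "(pos u x - pos v x - eps) * (pos u y - pos v y - eps) > 0"
proof (rule ccontr)
  assume "\<not> ?thesis"
  then have "((al u - al v) * x + (be u - be v - eps)) * ((al u - al v) * y + (be u - be v - eps)) \<le> 0"
    unfolding pos_diff_affine by simp
  then obtain t where t: "t \<in> {x..y}" "(al u - al v) * t + (be u - be v - eps) = 0"
    using affine_ivt[OF xy] by blast
  then have "pos u t - pos v t = eps" using pos_diff_affine[of u t v eps] by simp
  then have "t \<in> Zeps" unfolding Zeps_def using uv by blast
  then show False using Z t by blast
qed

lemma Rel_const:
  assumes xy: "x \<le> y" and xab: "x \<in> {a..b}" "y \<in> {a..b}" and Z: "Zeps \<inter> {x..y} = {}"
  shows "Rel x = Rel y"
proof -
  have "(\<bar>pos u x - pos v x\<bar> \<le> eps) = (\<bar>pos u y - pos v y\<bar> \<le> eps)" if uv: "u \<in> E" "v \<in> E" for u v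
  proof (cases "al u = al v")
    case True
    then have "pos u x - pos v x = pos u y - pos v y" unfolding pos_def by (simp add: algebra_simps)
    then show ?thesis by simp
  next
    case False
    have 1: "(pos u x - pos v x - eps) * (pos u y - pos v y - eps) > 0" using no_cross_eps[OF xy Z uv False] .
    have 2: "(pos v x - pos u x - eps) * (pos v y - pos u y - eps) > 0" using no_cross_eps[OF xy Z uv(2,1)] False by simp
    show ?thesis
    proof -
      have "(pos u x - pos v x - eps \<le> 0) = (pos u y - pos v y - eps \<le> 0)"
        using 1 by (auto simp: zero_less_mult_iff)
      moreover have "(pos v x - pos u x - eps \<le> 0) = (pos v y - pos u y - eps \<le> 0)"
        using 2 by (auto simp: zero_less_mult_iff)
      ultimately show ?thesis by (simp add: abs_le_iff)
    qed
  qed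
  then show ?thesis unfolding Rel_pos[OF xab(1)] Rel_pos[OF xab(2)] by auto
qed

end



context seg begin

lemma B_sym: "(x, s, p) \<in> B \<Longrightarrow> (x, p, s) \<in> B"
proof -
  assume "(x, s, p) \<in> B"
  then obtain A J where h: "component_pair n traj tv tau eps A J" "x \<in> J" "s \<in> A" "p \<in> A" "s \<noteq> p"
    "x \<in> {a..b}" "s \<in> E" "p \<in> E" "fd s x = fd p x" "\<forall>q\<in>A. fd s x \<le> fd q x"
    by (rule B_elim)
  show ?thesis by (rule B_intro[OF h(1,2,4,3)]) (use h in auto)
qed

lemma B_E: "(x, s, p) \<in> B \<Longrightarrow> s \<in> E \<and> p \<in> E \<and> x \<in> {a..b} \<and> s \<noteq> p \<and> fd s x = fd p x"
  by (erule B_elim) auto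

lemma gap:
  assumes B: "(x, s, p) \<in> B" and sp: "pos s x < pos p x"
  shows "pos s x < Ic x" "Ic x < pos p x" "pos s x + pos p x = 2 * Ic x"
    "\<forall>q\<in>E. pos q x \<le> pos s x \<or> pos p x \<le> pos q x"
proof -
  obtain A J where h: "component_pair n traj tv tau eps A J" "x \<in> J" "s \<in> A" "p \<in> A" "s \<noteq> p"
    "x \<in> {a..b}" "s \<in> E" "p \<in> E" "fd s x = fd p x" "\<forall>q\<in>A. fd s x \<le> fd q x"
    using B by (rule B_elim)
  have e: "\<bar>pos s x - Ic x\<bar> = \<bar>pos p x - Ic x\<bar>" using h(9) unfolding fd_def .
  then have sum: "pos s x + pos p x = 2 * Ic x" using sp by (auto simp: abs_if split: if_splits)
  then show "pos s x < Ic x" "Ic x < pos p x" "pos s x + pos p x = 2 * Ic x" using sp by auto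
  have Ac: "\<And>c. c \<in> A \<Longrightarrow> pos c x \<le> pos s x \<or> pos p x \<le> pos c x"
  proof -
    fix c assume "c \<in> A"
    then have "fd s x \<le> fd c x" using h(10) by auto
    then show "pos c x \<le> pos s x \<or> pos p x \<le> pos c x" using sum sp unfolding fd_def by (auto simp: abs_if split: if_splits)
  qed
  have A: "A \<in> conn_classes n traj eps x" using comp_class h by auto
  have RelE: "\<And>r c. (r, c) \<in> Rel x \<Longrightarrow> r \<in> E \<and> c \<in> E \<and> \<bar>pos r x - pos c x\<bar> \<le> eps"
    using Rel_pos[OF h(6)] by auto
  show "\<forall>q\<in>E. pos q x \<le> pos s x \<or> pos p x \<le> pos q x"
  proof (rule ccontr)
    assume "\<not> ?thesis"
    then obtain q where q: "q \<in> E" "pos s x < pos q x" "pos q x < pos p x" by force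
    have qA: "q \<notin> A" using Ac q by fastforce
    have low: "pos r x \<le> pos s x" if "(s, r) \<in> (Rel x)\<^sup>*" for r
      using that
    proof (induction rule: rtrancl_induct)
      case base then show ?case by simp
    next
      case (step r c)
      have cA: "c \<in> A" using class_closed[OF A h(3)] step.hyps(1,2) by (meson rtrancl.rtrancl_into_rtrancl)
      show ?case
      proof (rule ccontr)
        assume "\<not> pos c x \<le> pos s x"
        then have pc: "pos p x \<le> pos c x" using Ac[OF cA] by simp
        have rc: "r \<in> E" "\<bar>pos r x - pos c x\<bar> \<le> eps" using RelE[OF step.hyps(2)] by auto
        have "\<bar>pos r x - pos q x\<bar> \<le> eps" using rc(2) pc q step.IH by (simp add: abs_le_iff)
        then have "(r, q) \<in> Rel x" using Rel_pos[OF h(6)] rc(1) q(1) by auto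
        then have "(s, q) \<in> (Rel x)\<^sup>*" using step.hyps(1) by (meson rtrancl.rtrancl_into_rtrancl)
        then have "q \<in> A" using class_closed[OF A h(3)] by simp
        then show False using qA by simp
      qed
    qed
    have "(s, p) \<in> (Rel x)\<^sup>*" using class_mem[OF A h(3)] h(4) by blast
    then show False using low sp by fastforce
  qed
qed

end



context seg begin

definition "Dset = {x. x \<in> {a<..<b} \<and> (\<exists>s p. (x, s, p) \<in> B \<and> pos s x < pos p x)}"

lemma ident_helper:
  assumes uv: "u \<in> E" "v \<in> E" and xx: "x \<le> x'" and h1: "pos u x \<le> pos v x" and h2: "pos v x' \<le> pos u x'"
    and C: "Coll \<inter> {x..x'} = {}"
  shows "al u = al v \<and> be u = be v"
proof -
  have "al u = al v"
  proof (rule ccontr)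
    assume ne: "al u \<noteq> al v"
    have "((al u - al v) * x + (be u - be v - 0)) * ((al u - al v) * x' + (be u - be v - 0)) \<le> 0"
      using h1 h2 pos_diff_affine[of u x v 0] pos_diff_affine[of u x' v 0] by (simp add: mult_le_0_iff)
    then obtain t where t: "t \<in> {x..x'}" "(al u - al v) * t + (be u - be v - 0) = 0"
      using affine_ivt[OF xx] by blast
    then have "pos u t = pos v t" using pos_diff_affine[of u t v 0] by simp
    then have "t \<in> Coll" unfolding Coll_def using uv ne by blast
    then show False using C t by blast
  qed
  moreover then have "be u = be v" using h1 h2 unfolding pos_def by simp
  ultimately show ?thesis by simp
qed

lemma affine_neg_between:
  fixes K M x x' y :: real
  assumes "x \<le> y" "y \<le> x'" "K * x + M < 0" "K * x' + M < 0"
  shows "K * y + M < 0"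
  using affine_between(1)[OF assms(1,2), of K M] assms(3,4) by simp

lemma affine_nonpos_between:
  fixes K M x x' y :: real
  assumes "x \<le> y" "y \<le> x'" "K * x + M \<le> 0" "K * x' + M \<le> 0"
  shows "K * y + M \<le> 0"
  using affine_between(1)[OF assms(1,2), of K M] assms(3,4) by simp

lemma NE:
  assumes x: "x \<in> Dset" and x': "x' \<in> Dset" and xx: "x < x'"
    and C: "Coll \<inter> {x..x'} = {}" and Z: "Zeps \<inter> {x..x'} = {}" and VV: "V \<inter> {x<..<x'} = {}"
    and sg: "\<forall>q\<in>E. (pos q x - Ic x) * (pos q x' - Ic x') > 0"
  shows False
proof -
  obtain s p where sp: "(x, s, p) \<in> B" "pos s x < pos p x" "x \<in> {a<..<b}" using x unfolding Dset_def by blast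
  obtain s' p' where sp': "(x', s', p') \<in> B" "pos s' x' < pos p' x'" "x' \<in> {a<..<b}" using x' unfolding Dset_def by blast
  note g = gap[OF sp(1,2)] and g' = gap[OF sp'(1,2)]
  have sE: "s \<in> E" "p \<in> E" "s' \<in> E" "p' \<in> E" using B_E sp(1) sp'(1) by auto
  have ne: "E \<noteq> {}" using sE by auto
  have xab: "x \<in> {a..b}" "x' \<in> {a..b}" using sp(3) sp'(3) by auto
  have xxle: "x \<le> x'" using xx by simp
  have s1: "pos s' x < Ic x"
  proof -
    have "(pos s' x - Ic x) * (pos s' x' - Ic x') > 0" using sg sE by auto
    moreover have "pos s' x' - Ic x' < 0" using g'(1) by simp
    ultimately show ?thesis by (simp add: zero_less_mult_iff)
  qed
  have s2: "pos s x' < Ic x'"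
  proof -
    have "(pos s x - Ic x) * (pos s x' - Ic x') > 0" using sg sE by auto
    moreover have "pos s x - Ic x < 0" using g(1) by simp
    ultimately show ?thesis by (simp add: zero_less_mult_iff)
  qed
  have p1: "Ic x < pos p' x"
  proof -
    have "(pos p' x - Ic x) * (pos p' x' - Ic x') > 0" using sg sE by auto
    moreover have "pos p' x' - Ic x' > 0" using g'(2) by simp
    ultimately show ?thesis by (simp add: zero_less_mult_iff)
  qed
  have p2: "Ic x' < pos p x'"
  proof -
    have "(pos p x - Ic x) * (pos p x' - Ic x') > 0" using sg sE by auto
    moreover have "pos p x - Ic x > 0" using g(2) by simp
    ultimately show ?thesis by (simp add: zero_less_mult_iff)
  qed
  have "pos s' x \<le> pos s x" using g(4) sE(3) s1 g(2) by fastforce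
  moreover have "pos s x' \<le> pos s' x'" using g'(4) sE(1) s2 g'(2) by fastforce
  ultimately have ss: "al s' = al s \<and> be s' = be s" using ident_helper[OF sE(3,1) xxle _ _ C] by blast
  have "pos p x \<le> pos p' x" using g(4) sE(4) p1 g(1) by fastforce
  moreover have "pos p' x' \<le> pos p x'" using g'(4) sE(2) p2 g'(1) by fastforce
  ultimately have pp: "al p = al p' \<and> be p = be p'" using ident_helper[OF sE(2,4) xxle _ _ C] by blast
  have ps': "\<And>t. pos s' t = pos s t" "\<And>t. pos p' t = pos p t" using ss pp unfolding pos_def by auto
  obtain k m where km: "\<forall>y\<in>{x..x'}. Ic y = k * y + m" using Ic_affine[OF ne xxle VV] by blast
  define K where "K = al s + al p - 2 * k"
  define M where "M = be s + be p - 2 * m"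
  have hK: "\<And>y. y \<in> {x..x'} \<Longrightarrow> pos s y + pos p y - 2 * Ic y = K * y + M"
    using km unfolding K_def M_def pos_def by (simp add: algebra_simps)
  have z1: "K * x + M = 0" using hK[of x] g(3) xxle by simp
  have z2: "K * x' + M = 0" using hK[of x'] g'(3) ps' xxle by simp
  have "K * x' - K * x = 0" using z1 z2 by linarith
  then have "K * (x' - x) = 0" by (simp add: right_diff_distrib)
  then have K0: "K = 0" using xx by simp
  then have M0: "M = 0" using z1 by simp
  have sum: "\<And>y. y \<in> {x..x'} \<Longrightarrow> pos s y + pos p y = 2 * Ic y" using hK K0 M0 by fastforce
  have spy: "\<And>y. y \<in> {x..x'} \<Longrightarrow> pos s y < pos p y"
  proof -
    fix y assume y: "y \<in> {x..x'}"
    have "(al s - al p) * y + (be s - be p) < 0"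
      using affine_neg_between[of x y x' "al s - al p" "be s - be p"] y sp(2) sp'(2) ps'
      unfolding pos_def by (simp add: algebra_simps)
    then show "pos s y < pos p y" unfolding pos_def by (simp add: algebra_simps)
  qed
  have gapy: "\<And>y q. y \<in> {x..x'} \<Longrightarrow> q \<in> E \<Longrightarrow> pos q y \<le> pos s y \<or> pos p y \<le> pos q y"
  proof -
    fix y q assume y: "y \<in> {x..x'}" and q: "q \<in> E"
    have c1: "pos q x \<le> pos s x \<or> pos p x \<le> pos q x" using g(4) q by blast
    have c2: "pos q x' \<le> pos s x' \<or> pos p x' \<le> pos q x'" using g'(4) q ps' by simp
    show "pos q y \<le> pos s y \<or> pos p y \<le> pos q y"
    proof (cases "pos q x \<le> pos s x")
      case True
      show ?thesis
      proof (cases "pos q x' \<le> pos s x'")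
        case True2: True
        have "(al q - al s) * y + (be q - be s) \<le> 0"
          using affine_nonpos_between[of x y x' "al q - al s" "be q - be s"] y True True2
          unfolding pos_def by (simp add: algebra_simps)
        then show ?thesis unfolding pos_def by (simp add: algebra_simps)
      next
        case False2: False
        then have "pos p x' \<le> pos q x'" using c2 by simp
        then have "pos s x' \<le> pos q x'" using spy[of x'] xxle by fastforce
        then have "al q = al s \<and> be q = be s" using ident_helper[OF q sE(1) xxle True _ C] by blast
        then show ?thesis using False2 unfolding pos_def by simp
      qed
    next
      case False
      then have pq: "pos p x \<le> pos q x" using c1 by simp
      show ?thesis
      proof (cases "pos p x' \<le> pos q x'")
        case True2: True
        have "(al p - al q) * y + (be p - be q) \<le> 0"
          using affine_nonpos_between[of x y x' "al p - al q" "be p - be q"] y pq True2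
          unfolding pos_def by (simp add: algebra_simps)
        then show ?thesis unfolding pos_def by (simp add: algebra_simps)
      next
        case False2: False
        then have q2: "pos q x' \<le> pos s x'" using c2 by simp
        have "pos s x \<le> pos q x" using pq sp(2) by simp
        then have "al s = al q \<and> be s = be q" using ident_helper[OF sE(1) q xxle _ q2 C] by blast
        then show ?thesis using False unfolding pos_def by simp
      qed
    qed
  qed
  obtain A J where AJ: "component_pair n traj tv tau eps A J" "x \<in> J" "s \<in> A" "p \<in> A" "s \<noteq> p"
    "x \<in> {a..b}" "s \<in> E" "p \<in> E" "fd s x = fd p x" "\<forall>q\<in>A. fd s x \<le> fd q x"
    using sp(1) by (rule B_elim)
  have Ax: "A \<in> conn_classes n traj eps x" using comp_class AJ by auto
  have Ay: "\<forall>y\<in>{x..x'}. A \<in> conn_classes n traj eps y"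
  proof
    fix y assume y: "y \<in> {x..x'}"
    have yab: "y \<in> {a..b}" using y xab(1,2) by simp
    have "{x..y} \<subseteq> {x..x'}" using y by simp
    then have "Zeps \<inter> {x..y} = {}" using Z by blast
    moreover have "x \<le> y" using y by simp
    ultimately have "Rel x = Rel y" using Rel_const[of x y] xab(1) yab by blast
    then have "conn_classes n traj eps x = conn_classes n traj eps y" by (rule classes_eq)
    then show "A \<in> conn_classes n traj eps y" using Ax by simp
  qed
  have dd: "{x..x'} \<subseteq> {tv 0..tv tau}" using xab dom by auto
  have JJ: "{x..x'} \<subseteq> J" using comp_extend[OF AJ(1,2) _ dd Ay] xxle by auto
  have AE: "A \<subseteq> E" using class_E[OF Ax] .
  have inB: "(y, s, p) \<in> B" if y: "y \<in> {x<..<x'}" for y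
  proof -
    have y': "y \<in> {x..x'}" using y by auto
    have yab: "y \<in> {a..b}" using y' xab by auto
    have e1: "fd s y = Ic y - pos s y" using sum[OF y'] spy[OF y'] unfolding fd_def by simp
    have e2: "fd p y = pos p y - Ic y" using sum[OF y'] spy[OF y'] unfolding fd_def by simp
    have eq: "fd s y = fd p y" using e1 e2 sum[OF y'] by simp
    have le: "\<forall>q\<in>A. fd s y \<le> fd q y"
    proof
      fix q assume "q \<in> A"
      then have q: "q \<in> E" using AE by auto
      show "fd s y \<le> fd q y" using gapy[OF y' q] e1 eq e2 unfolding fd_def by (auto simp: abs_if)
    qed
    show ?thesis using B_intro[OF AJ(1) _ AJ(3,4,5) yab eq le] JJ y' by auto
  qed
  have "(\<lambda>y. (y, s, p)) ` {x<..<x'} \<subseteq> B" using inB by auto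
  moreover have "infinite ((\<lambda>y. (y, s, p)) ` {x<..<x'})"
    using infinite_Ioo[OF xx] by (simp add: finite_image_iff inj_on_def)
  ultimately show False using finB finite_subset by blast
qed

end



definition nxt :: "real set \<Rightarrow> real \<Rightarrow> real" where
  "nxt D x = Min {y\<in>D. x < y}"

lemma nxt_props:
  assumes "finite D" "x \<in> D" "x < Max D"
  shows "nxt D x \<in> D" "x < nxt D x" "\<And>z. z \<in> D \<Longrightarrow> x < z \<Longrightarrow> nxt D x \<le> z"
proof -
  have "D \<noteq> {}" using assms(2) by blast
  then have "Max D \<in> D" using Max_in[OF assms(1)] by blast
  then have ne: "{y\<in>D. x < y} \<noteq> {}" using assms(3) by blast
  have f: "finite {y\<in>D. x < y}" using assms by simp
  have "nxt D x \<in> {y\<in>D. x < y}" unfolding nxt_def using Min_in[OF f ne] .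
  then show "nxt D x \<in> D" "x < nxt D x" by auto
  show "\<And>z. z \<in> D \<Longrightarrow> x < z \<Longrightarrow> nxt D x \<le> z" unfolding nxt_def using f by (intro Min_le) auto
qed

lemma card_le1_real:
  fixes T :: "real set"
  assumes "finite T" "\<And>x y. x \<in> T \<Longrightarrow> y \<in> T \<Longrightarrow> x < y \<Longrightarrow> False"
  shows "card T \<le> 1"
proof -
  have "\<forall>x\<in>T. \<forall>y\<in>T. x = y"
  proof (intro ballI)
    fix x y assume "x \<in> T" "y \<in> T"
    then have "\<not> x < y" "\<not> y < x" using assms(2)[of x y] assms(2)[of y x] by auto
    then show "x = y" by simp
  qed
  then show ?thesis using card_le_Suc0_iff_eq[OF assms(1)] by simp
qed

lemma count_events:
  assumes fD: "finite D" and fE: "finite Ev"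
  shows "card {x\<in>D. x < Max D \<and> Ev \<inter> {x..nxt D x} \<noteq> {}} \<le> 2 * card Ev"
proof -
  define T where "T e = {x\<in>D. x < Max D \<and> x \<le> e \<and> e \<le> nxt D x}" for e
  have sub: "{x\<in>D. x < Max D \<and> Ev \<inter> {x..nxt D x} \<noteq> {}} \<subseteq> (\<Union>e\<in>Ev. T e)"
    unfolding T_def by auto
  have fT: "finite (T e)" for e unfolding T_def using fD by simp
  have cT: "card (T e) \<le> 2" for e
  proof (cases "T e = {}")
    case True then show ?thesis by simp
  next
    case False
    define mx where "mx = Max (T e)"
    have mx: "mx \<in> T e" unfolding mx_def using Max_in[OF fT False] .
    have "card (T e - {mx}) \<le> 1"
    proof (rule card_le1_real)
      show "finite (T e - {mx})" using fT by simp
      fix x y assume x: "x \<in> T e - {mx}" and y: "y \<in> T e - {mx}" and xy: "x < y"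
      have xD: "x \<in> D" "x < Max D" "e \<le> nxt D x" using x unfolding T_def by auto
      have yD: "y \<in> D" "y \<le> e" using y unfolding T_def by auto
      have "nxt D x \<le> y" using nxt_props(3)[OF fD xD(1,2) yD(1) xy] .
      moreover have "y \<le> mx" unfolding mx_def using y fT by (intro Max_ge) auto
      moreover have "y \<noteq> mx" using y by simp
      moreover have "mx \<le> e" using mx unfolding T_def by simp
      ultimately show False using xD(3) by linarith
    qed
    moreover have "card (T e) = card (T e - {mx}) + 1" using card_Diff_singleton[OF mx] fT mx
      by (metis One_nat_def Suc_pred card_gt_0_iff empty_iff le_add_diff_inverse2 less_eq_Suc_le plus_1_eq_Suc)
    ultimately show ?thesis by simp
  qed
  have "card {x\<in>D. x < Max D \<and> Ev \<inter> {x..nxt D x} \<noteq> {}} \<le> card (\<Union>e\<in>Ev. T e)"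
    using card_mono[OF _ sub] fE fT by simp
  also have "\<dots> \<le> (\<Sum>e\<in>Ev. card (T e))" by (rule card_UN_le[OF fE])
  also have "\<dots> \<le> (\<Sum>e\<in>Ev. 2)" by (intro sum_mono cT)
  finally show ?thesis by simp
qed

lemma affine_two_sign_changes:
  fixes k m x1 n1 x2 n2 :: real
  assumes "x1 < n1" "n1 \<le> x2" "x2 < n2"
    and "(k*x1+m) * (k*n1+m) < 0" "(k*x2+m) * (k*n2+m) < 0"
  shows False
proof -
  consider "k = 0" | "k > 0" | "k < 0" by linarith
  then show False
  proof cases
    case 1 then show False using assms(4) by (simp add: mult_less_0_iff)
  next
    case 2
    have m1: "k*x1 < k*n1" "k*n1 \<le> k*x2" "k*x2 < k*n2" using 2 assms(1,2,3) by auto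
    then show False using assms(4,5) by (auto simp: mult_less_0_iff)
  next
    case 3
    have m1: "k*x1 > k*n1" "k*n1 \<ge> k*x2" "k*x2 > k*n2" using 3 assms(1,2,3) by auto
    then show False using assms(4,5) by (auto simp: mult_less_0_iff)
  qed
qed

lemma count_sign:
  fixes g :: "real \<Rightarrow> real"
  assumes fD: "finite D" and fV: "finite V"
    and aff: "\<And>c d. c \<le> d \<Longrightarrow> V \<inter> {c<..<d} = {} \<Longrightarrow> \<exists>k m. \<forall>y\<in>{c..d}. g y = k * y + m"
  shows "card {x\<in>D. x < Max D \<and> V \<inter> {x<..<nxt D x} = {} \<and> g x * g (nxt D x) < 0} \<le> card V + 1"
proof -
  define X where "X = {x\<in>D. x < Max D \<and> V \<inter> {x<..<nxt D x} = {} \<and> g x * g (nxt D x) < 0}"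
  define phi where "phi x = card {v\<in>V. v \<le> x}" for x
  have key: False if x1: "x1 \<in> X" and x2: "x2 \<in> X" and lt: "x1 < x2" and eq: "phi x1 = phi x2" for x1 x2
  proof -
    have h1: "x1 \<in> D" "x1 < Max D" "V \<inter> {x1<..<nxt D x1} = {}" "g x1 * g (nxt D x1) < 0" using x1 unfolding X_def by auto
    have h2: "x2 \<in> D" "x2 < Max D" "V \<inter> {x2<..<nxt D x2} = {}" "g x2 * g (nxt D x2) < 0" using x2 unfolding X_def by auto
    have n1: "x1 < nxt D x1" "nxt D x1 \<le> x2" using nxt_props[OF fD h1(1,2)] h2(1) lt by auto
    have n2: "x2 < nxt D x2" using nxt_props[OF fD h2(1,2)] by auto
    have subs: "{v\<in>V. v \<le> x1} \<subseteq> {v\<in>V. v \<le> x2}" using lt by auto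
    have "{v\<in>V. v \<le> x1} = {v\<in>V. v \<le> x2}"
      using card_subset_eq[OF _ subs] eq fV unfolding phi_def by simp
    then have "V \<inter> {x1<..x2} = {}" using lt by (auto simp: set_eq_iff) (metis not_less)
    then have "V \<inter> {x1<..<nxt D x2} = {}" using h2(3) by (auto simp: set_eq_iff)
    then obtain k m where km: "\<forall>y\<in>{x1..nxt D x2}. g y = k * y + m"
      using aff[of x1 "nxt D x2"] n1 n2 lt by fastforce
    have "(k*x1+m) * (k*nxt D x1+m) < 0" "(k*x2+m) * (k*nxt D x2+m) < 0"
      using h1(4) h2(4) km n1 n2 lt by auto
    then show False using affine_two_sign_changes[OF n1(1) n1(2) n2] by blast
  qed
  have inj: "inj_on phi X"
  proof (rule inj_onI)
    fix x y assume "x \<in> X" "y \<in> X" "phi x = phi y"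
    then show "x = y" using key by (metis linorder_neqE_linordered_idom)
  qed
  have "phi ` X \<subseteq> {0..card V}" unfolding phi_def using fV by (auto intro: card_mono)
  then have "card (phi ` X) \<le> card V + 1" using card_mono[of "{0..card V}"] by fastforce
  then show ?thesis using card_image[OF inj] unfolding X_def by simp
qed




context seg begin

lemma Dset_fin: "finite Dset"
proof -
  have "Dset \<subseteq> fst ` B" unfolding Dset_def by force
  then show ?thesis using finB finite_subset by blast
qed

lemma Dset_nz: "x \<in> Dset \<Longrightarrow> q \<in> E \<Longrightarrow> pos q x - Ic x \<noteq> 0"
proof -
  assume x: "x \<in> Dset" and q: "q \<in> E"
  obtain s p where sp: "(x, s, p) \<in> B" "pos s x < pos p x" using x unfolding Dset_def by blast
  note g = gap[OF sp]
  show ?thesis using g(1,2) g(4) q by fastforce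
qed

lemma Dset_card: "card Dset \<le> 11 * n^2 + 1"
proof (cases "Dset = {}")
  case True then show ?thesis by simp
next
  case False
  define D where "D = Dset"
  have fD: "finite D" unfolding D_def using Dset_fin .
  have Dne: "D \<noteq> {}" using False unfolding D_def .
  obtain x0 where "x0 \<in> Dset" using False by blast
  then obtain s0 p0 where "(x0, s0, p0) \<in> B" unfolding Dset_def by blast
  then have "s0 \<in> E" using B_E by blast
  then have Ene: "E \<noteq> {}" and n1: "n \<ge> 1" unfolding E_def by auto
  define D' where "D' = {x\<in>D. x < Max D}"
  have DD: "D \<subseteq> insert (Max D) D'"
  proof
    fix x assume x: "x \<in> D"
    have "x \<le> Max D" using Max_ge[OF fD x] .
    then show "x \<in> insert (Max D) D'" unfolding D'_def using x by (auto simp: le_less)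
  qed
  define X1 where "X1 = {x\<in>D. x < Max D \<and> Coll \<inter> {x..nxt D x} \<noteq> {}}"
  define X2 where "X2 = {x\<in>D. x < Max D \<and> Zeps \<inter> {x..nxt D x} \<noteq> {}}"
  define X3 where "X3 = {x\<in>D. x < Max D \<and> V \<inter> {x..nxt D x} \<noteq> {}}"
  define X4 where "X4 q = {x\<in>D. x < Max D \<and> V \<inter> {x<..<nxt D x} = {} \<and> (pos q x - Ic x) * (pos q (nxt D x) - Ic (nxt D x)) < 0}" for q
  have sub: "D' \<subseteq> X1 \<union> X2 \<union> X3 \<union> (\<Union>q\<in>E. X4 q)"
  proof
    fix x assume x: "x \<in> D'"
    then have xD: "x \<in> D" "x < Max D" unfolding D'_def by auto
    note nx = nxt_props[OF fD xD]
    show "x \<in> X1 \<union> X2 \<union> X3 \<union> (\<Union>q\<in>E. X4 q)"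
    proof (rule ccontr)
      assume nin: "x \<notin> X1 \<union> X2 \<union> X3 \<union> (\<Union>q\<in>E. X4 q)"
      have c1: "Coll \<inter> {x..nxt D x} = {}" using nin xD unfolding X1_def by auto
      have c2: "Zeps \<inter> {x..nxt D x} = {}" using nin xD unfolding X2_def by auto
      have c3': "V \<inter> {x..nxt D x} = {}" using nin xD unfolding X3_def by auto
      have c3: "V \<inter> {x<..<nxt D x} = {}" using c3' by auto
      have c4: "\<forall>q\<in>E. (pos q x - Ic x) * (pos q (nxt D x) - Ic (nxt D x)) > 0"
      proof
        fix q assume q: "q \<in> E"
        have "\<not> (pos q x - Ic x) * (pos q (nxt D x) - Ic (nxt D x)) < 0" using nin xD c3 q unfolding X4_def by auto
        moreover have "pos q x - Ic x \<noteq> 0" using Dset_nz[OF _ q] xD unfolding D_def by simp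
        moreover have "pos q (nxt D x) - Ic (nxt D x) \<noteq> 0" using Dset_nz[OF _ q] nx(1) unfolding D_def by simp
        ultimately show "(pos q x - Ic x) * (pos q (nxt D x) - Ic (nxt D x)) > 0"
          by (simp add: not_less order_le_less)
      qed
      show False using NE[OF _ _ nx(2) c1 c2 c3 c4] xD(1) nx(1) unfolding D_def by simp
    qed
  qed
  have C1: "card X1 \<le> 2 * n^2" unfolding X1_def using count_events[OF fD, of Coll] Coll_card by simp
  have C2: "card X2 \<le> 2 * n^2" unfolding X2_def using count_events[OF fD, of Zeps] Zeps_card by simp
  have C3: "card X3 \<le> 4 * n" unfolding X3_def using count_events[OF fD, of V] V_card by simp
  have C4: "card (X4 q) \<le> 2 * n + 1" if q: "q \<in> E" for q
  proof -
    have aff: "\<exists>k m. \<forall>y\<in>{c..d}. pos q y - Ic y = k * y + m" if cdd: "c \<le> d" "V \<inter> {c<..<d} = {}" for c d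
    proof -
      obtain k m where km: "\<forall>y\<in>{c..d}. Ic y = k * y + m" using Ic_affine[OF Ene cdd] by blast
      have "\<forall>y\<in>{c..d}. pos q y - Ic y = (al q - k) * y + (be q - m)"
        using km unfolding pos_def by (simp add: algebra_simps)
      then show ?thesis by blast
    qed
    have "card (X4 q) \<le> card V + 1"
      unfolding X4_def using count_sign[OF fD _ aff, of V] V_card by blast
    then show ?thesis using V_card by simp
  qed
  have fX4: "finite (X4 q)" for q unfolding X4_def using fD by simp
  have "card (\<Union>q\<in>E. X4 q) \<le> (\<Sum>q\<in>E. card (X4 q))" by (rule card_UN_le[OF finE])
  also have "\<dots> \<le> (\<Sum>q\<in>E. 2 * n + 1)" using C4 by (intro sum_mono) auto
  also have "\<dots> = n * (2 * n + 1)" using cardE by simp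
  finally have C4': "card (\<Union>q\<in>E. X4 q) \<le> n * (2 * n + 1)" .
  have fins: "finite X1" "finite X2" "finite X3" "finite (\<Union>q\<in>E. X4 q)"
    unfolding X1_def X2_def X3_def using fD fX4 finE by auto
  have "card D' \<le> card (X1 \<union> X2 \<union> X3 \<union> (\<Union>q\<in>E. X4 q))" using card_mono[OF _ sub] fins by simp
  also have "\<dots> \<le> card X1 + card X2 + card X3 + card (\<Union>q\<in>E. X4 q)"
  proof -
    have "card (X1 \<union> X2 \<union> X3 \<union> (\<Union>q\<in>E. X4 q)) \<le> card (X1 \<union> X2 \<union> X3) + card (\<Union>q\<in>E. X4 q)" by (rule card_Un_le)
    moreover have "card (X1 \<union> X2 \<union> X3) \<le> card (X1 \<union> X2) + card X3" by (rule card_Un_le)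
    moreover have "card (X1 \<union> X2) \<le> card X1 + card X2" by (rule card_Un_le)
    ultimately show ?thesis by linarith
  qed
  also have "\<dots> \<le> 2 * n^2 + 2 * n^2 + 4 * n + n * (2 * n + 1)" using C1 C2 C3 C4' by linarith
  also have "\<dots> \<le> 11 * n^2"
  proof -
    have n2: "n \<le> n^2" using n1 by (simp add: power2_eq_square)
    have "n * (2 * n + 1) = 2 * n^2 + n" by (simp add: power2_eq_square algebra_simps)
    then show ?thesis using n2 by linarith
  qed
  finally have "card D' \<le> 11 * n^2" .
  moreover have "card D \<le> card D' + 1"
  proof -
    have "card D \<le> card (insert (Max D) D')" using card_mono[OF _ DD] fD unfolding D'_def by simp
    also have "\<dots> \<le> card D' + 1" using fD unfolding D'_def by (simp add: card_insert_if)
    finally show ?thesis .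
  qed
  ultimately show ?thesis unfolding D_def by simp
qed

end



context seg begin

lemma pos_tendsto: "((\<lambda>y. pos u y - pos v y) \<longlongrightarrow> pos u x - pos v x) (at x within X)"
  unfolding pos_def by (intro tendsto_intros)

lemma ev_pair:
  assumes uv: "u \<in> E" "v \<in> E"
    and F2: "\<forall>u\<in>E. \<forall>v\<in>E. al u \<noteq> al v \<longrightarrow> pos u x - pos v x = eps \<longrightarrow> eventually (\<lambda>y. pos u y - pos v y \<le> eps) (at x within X)"
  shows "eventually (\<lambda>y. (\<bar>pos u y - pos v y\<bar> \<le> eps) = (\<bar>pos u x - pos v x\<bar> \<le> eps)) (at x within X)"
proof -
  note T = pos_tendsto[of u v x X]
  show ?thesis
  proof (cases "al u = al v")
    case True
    then have "\<And>y. pos u y - pos v y = be u - be v" unfolding pos_def by simp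
    then show ?thesis by simp
  next
    case ne: False
    consider "\<bar>pos u x - pos v x\<bar> < eps" | "pos u x - pos v x > eps" | "pos u x - pos v x < - eps"
      | "pos u x - pos v x = eps" | "pos u x - pos v x = - eps" by linarith
    then show ?thesis
    proof cases
      case 1
      have e1: "eventually (\<lambda>y. pos u y - pos v y < eps) (at x within X)" using order_tendstoD(2)[OF T] 1 by simp
      have e2: "eventually (\<lambda>y. pos u y - pos v y > - eps) (at x within X)" using order_tendstoD(1)[OF T] 1 by simp
      show ?thesis using eventually_conj[OF e1 e2] by (rule eventually_mono) (use 1 in auto)
    next
      case 2
      have e1: "eventually (\<lambda>y. pos u y - pos v y > eps) (at x within X)" using order_tendstoD(1)[OF T] 2 by simp
      show ?thesis using e1 by (rule eventually_mono) (use 2 in auto)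
    next
      case 3
      have e1: "eventually (\<lambda>y. pos u y - pos v y < - eps) (at x within X)" using order_tendstoD(2)[OF T] 3 by simp
      show ?thesis using e1 by (rule eventually_mono) (use 3 in auto)
    next
      case 4
      have e1: "eventually (\<lambda>y. pos u y - pos v y \<le> eps) (at x within X)" using F2 uv ne 4 by blast
      have e2: "eventually (\<lambda>y. pos u y - pos v y > - eps) (at x within X)" using order_tendstoD(1)[OF T] 4 eps by simp
      show ?thesis using eventually_conj[OF e1 e2] by (rule eventually_mono) (use 4 eps in auto)
    next
      case 5
      have "pos v x - pos u x = eps" using 5 by simp
      then have e1: "eventually (\<lambda>y. pos v y - pos u y \<le> eps) (at x within X)" using F2 uv ne by metis
      have e2: "eventually (\<lambda>y. pos u y - pos v y < eps) (at x within X)" using order_tendstoD(2)[OF T] 5 eps by simp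
      show ?thesis using eventually_conj[OF e1 e2] by (rule eventually_mono) (use 5 eps in auto)
    qed
  qed
qed

lemma ident_side:
  assumes x: "x \<in> {a<..<b}" and X: "X = {x<..} \<or> X = {..<x}"
    and AJ: "component_pair n traj tv tau eps A J" "x \<in> J" "s \<in> A" "p \<in> A" "s \<noteq> p"
    and id: "al s = al p" "be s = be p"
    and strict: "\<forall>q\<in>A - {s, p}. fd s x < fd q x"
    and F2: "\<forall>u\<in>E. \<forall>v\<in>E. al u \<noteq> al v \<longrightarrow> pos u x - pos v x = eps \<longrightarrow> eventually (\<lambda>y. pos u y - pos v y \<le> eps) (at x within X)"
  shows False
proof -
  have A: "A \<in> conn_classes n traj eps x" using comp_class AJ by auto
  have AE: "A \<subseteq> E" using class_E[OF A] .
  have Ene: "E \<noteq> {}" using AE AJ(3) by auto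
  have fA: "finite A" using AE finE finite_subset by blast
  have xab: "x \<in> {a..b}" using x by auto
  have ev_ab: "eventually (\<lambda>y. y \<in> {a<..<b}) (at x within X)"
    using X
  proof
    assume X1: "X = {x<..}"
    have "eventually (\<lambda>y. y \<in> {x<..<b}) (at_right x)" using x by (intro eventually_at_right_real) simp
    then show ?thesis unfolding X1 by (rule eventually_mono) (use x in auto)
  next
    assume X1: "X = {..<x}"
    have "eventually (\<lambda>y. y \<in> {a<..<x}) (at_left x)" using x by (intro eventually_at_left_real) simp
    then show ?thesis unfolding X1 by (rule eventually_mono) (use x in auto)
  qed
  have ev_rel: "eventually (\<lambda>y. \<forall>u\<in>E. \<forall>v\<in>E. (\<bar>pos u y - pos v y\<bar> \<le> eps) = (\<bar>pos u x - pos v x\<bar> \<le> eps)) (at x within X)"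
    using ev_pair[OF _ _ F2] finE by (simp add: eventually_ball_finite)
  have ev_fd: "eventually (\<lambda>y. \<forall>q\<in>A - {s, p}. fd s y < fd q y) (at x within X)"
  proof -
    have "eventually (\<lambda>y. fd s y < fd q y) (at x within X)" if q: "q \<in> A - {s, p}" for q
    proof -
      have T: "((\<lambda>y. fd q y - fd s y) \<longlongrightarrow> fd q x - fd s x) (at x within X)"
        by (intro tendsto_diff fd_tendsto[OF Ene])
      have "0 < fd q x - fd s x" using strict q by simp
      then have "eventually (\<lambda>y. fd q y - fd s y > 0) (at x within X)"
        using order_tendstoD(1)[OF T] by blast
      then show ?thesis by (rule eventually_mono) simp
    qed
    then show ?thesis using fA by (simp add: eventually_ball_finite)
  qed
  define P where "P y = (y \<in> {a<..<b} \<and> (\<forall>u\<in>E. \<forall>v\<in>E. (\<bar>pos u y - pos v y\<bar> \<le> eps) = (\<bar>pos u x - pos v x\<bar> \<le> eps))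
     \<and> (\<forall>q\<in>A - {s, p}. fd s y < fd q y))" for y
  have evP: "eventually P (at x within X)" unfolding P_def using eventually_conj[OF ev_ab eventually_conj[OF ev_rel ev_fd]] .
  have PA: "A \<in> conn_classes n traj eps y" if "P y" for y
  proof -
    have y: "y \<in> {a..b}" using that unfolding P_def by auto
    have "Rel y = Rel x" unfolding Rel_pos[OF y] Rel_pos[OF xab] using that unfolding P_def by auto
    then have "conn_classes n traj eps y = conn_classes n traj eps x" by (rule classes_eq)
    then show ?thesis using A by simp
  qed
  have PB: "(y, s, p) \<in> B" if Py: "P y" and yJ: "y \<in> J" for y
  proof -
    have y: "y \<in> {a..b}" using Py unfolding P_def by auto
    have eq: "fd s y = fd p y" unfolding fd_def pos_def using id by simp
    have le: "\<forall>q\<in>A. fd s y \<le> fd q y"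
    proof
      fix q assume q: "q \<in> A"
      show "fd s y \<le> fd q y"
      proof (cases "q \<in> {s, p}")
        case True then show ?thesis using eq by auto
      next
        case False
        then have "q \<in> A - {s, p}" using q by simp
        moreover have "\<forall>q\<in>A - {s, p}. fd s y < fd q y" using Py unfolding P_def by blast
        ultimately have "fd s y < fd q y" by (rule bspec[rotated])
        then show ?thesis by (rule less_imp_le)
      qed
    qed
    show ?thesis using B_intro[OF AJ(1) yJ AJ(3,4,5) y eq le] .
  qed
  have dd: "{a..b} \<subseteq> {tv 0..tv tau}" using dom by auto
  obtain Y where Y: "infinite Y" "\<And>y. y \<in> Y \<Longrightarrow> (y, s, p) \<in> B"
    using X
  proof
    assume X1: "X = {x<..}"
    obtain c where c: "c > x" "\<And>y. x < y \<Longrightarrow> y < c \<Longrightarrow> P y"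
      using evP unfolding X1 eventually_at_right_field by blast
    have "(y, s, p) \<in> B" if y: "y \<in> {x<..<c}" for y
    proof -
      have "\<forall>z\<in>{x..y}. A \<in> conn_classes n traj eps z"
      proof
        fix z assume z: "z \<in> {x..y}"
        show "A \<in> conn_classes n traj eps z"
        proof (cases "z = x")
          case True then show ?thesis using A by simp
        next
          case False then show ?thesis using PA c(2)[of z] z y by auto
        qed
      qed
      moreover have "{x..y} \<subseteq> {tv 0..tv tau}" using dd y c(2)[of y] xab unfolding P_def by auto
      ultimately have "{x..y} \<subseteq> J" using comp_extend[OF AJ(1,2)] y by auto
      then have "y \<in> J" using y by auto
      then show ?thesis using PB c(2)[of y] y by auto
    qed
    then show ?thesis using that[of "{x<..<c}"] c(1) by auto
  next
    assume X1: "X = {..<x}"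
    obtain c where c: "c < x" "\<And>y. c < y \<Longrightarrow> y < x \<Longrightarrow> P y"
      using evP unfolding X1 eventually_at_left_field by blast
    have "(y, s, p) \<in> B" if y: "y \<in> {c<..<x}" for y
    proof -
      have "\<forall>z\<in>{y..x}. A \<in> conn_classes n traj eps z"
      proof
        fix z assume z: "z \<in> {y..x}"
        show "A \<in> conn_classes n traj eps z"
        proof (cases "z = x")
          case True then show ?thesis using A by simp
        next
          case False then show ?thesis using PA c(2)[of z] z y by auto
        qed
      qed
      moreover have "{y..x} \<subseteq> {tv 0..tv tau}" using dd y c(2)[of y] xab unfolding P_def by auto
      ultimately have "{y..x} \<subseteq> J" using comp_extend[OF AJ(1,2)] y by auto
      then have "y \<in> J" using y by auto
      then show ?thesis using PB c(2)[of y] y by auto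
    qed
    then show ?thesis using that[of "{c<..<x}"] c(1) by auto
  qed
  have "(\<lambda>y. (y, s, p)) ` Y \<subseteq> B" using Y(2) by auto
  moreover have "infinite ((\<lambda>y. (y, s, p)) ` Y)"
    using Y(1) by (simp add: finite_image_iff inj_on_def)
  ultimately show False using finB finite_subset by blast
qed

end



context seg begin

lemma ident:
  assumes t: "(x, s, p) \<in> B" and x: "x \<in> {a<..<b}" and id: "al s = al p" "be s = be p"
  shows "\<exists>q. (x, s, q) \<in> B \<and> \<not> (al q = al s \<and> be q = be s)"
proof (rule ccontr)
  assume H: "\<not> ?thesis"
  have H': "al q = al s \<and> be q = be s" if qB: "(x, s, q) \<in> B" for q
  proof (rule ccontr)
    assume nq: "\<not> (al q = al s \<and> be q = be s)"
    have "\<exists>q. (x, s, q) \<in> B \<and> \<not> (al q = al s \<and> be q = be s)" by (rule exI[of _ q]) (rule conjI[OF qB nq])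
    with H show False by contradiction
  qed
  obtain A J where AJ: "component_pair n traj tv tau eps A J" "x \<in> J" "s \<in> A" "p \<in> A" "s \<noteq> p"
    "x \<in> {a..b}" "s \<in> E" "p \<in> E" "fd s x = fd p x" "\<forall>q\<in>A. fd s x \<le> fd q x"
    using t by (rule B_elim)
  have A: "A \<in> conn_classes n traj eps x" using comp_class AJ by auto
  have AE: "A \<subseteq> E" using class_E[OF A] .
  have strict: "\<forall>q\<in>A - {s, p}. fd s x < fd q x"
  proof
    fix q assume q: "q \<in> A - {s, p}"
    have le: "fd s x \<le> fd q x" using AJ(10) q by auto
    show "fd s x < fd q x"
    proof (rule ccontr)
      assume "\<not> fd s x < fd q x"
      then have eq: "fd s x = fd q x" using le by simp
      have sq: "s \<noteq> q" using q by auto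
      have qA: "q \<in> A" using q by blast
      have "(x, s, q) \<in> B" by (rule B_intro[OF AJ(1,2,3) qA sq AJ(6) eq AJ(10)])
      then have "al q = al s \<and> be q = be s" by (rule H')
      then have e0: "pos q x = pos s x" unfolding pos_def by simp
      have e1: "pos s x = pos p x" using id unfolding pos_def by simp
      have e2: "pos p x = pos q x" using e0 e1 by simp
      have qE: "q \<in> E" using AE q by blast
      have "p \<noteq> q" "s \<noteq> q" using q by auto
      then show False using gp3[OF AJ(6) AJ(7) AJ(8) qE AJ(5) _ _ e1 e2] by blast
    qed
  qed
  show False
  proof (cases "\<exists>u\<in>E. \<exists>v\<in>E. al u \<noteq> al v \<and> pos u x - pos v x = eps")
    case False
    show False by (rule ident_side[OF x _ AJ(1-5) id strict, of "{x<..}"]) (use False in auto)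
  next
    case True
    then obtain u0 v0 where uv0: "u0 \<in> E" "v0 \<in> E" "al u0 \<noteq> al v0" "pos u0 x - pos v0 x = eps" by blast
    have uniq: "u = u0 \<and> v = v0" if uv: "u \<in> E" "v \<in> E" "al u \<noteq> al v" "pos u x - pos v x = eps" for u v
    proof -
      have "u \<noteq> v" "u0 \<noteq> v0" using uv uv0 by auto
      have "{u, v} = {u0, v0}"
      proof (rule ccontr)
        assume "{u, v} \<noteq> {u0, v0}"
        moreover have "\<bar>pos u x - pos v x\<bar> = eps" "\<bar>pos u0 x - pos v0 x\<bar> = eps" using uv(4) uv0(4) eps by auto
        ultimately show False using gp_eps[OF AJ(6) uv(1,2) uv0(1,2) \<open>u \<noteq> v\<close> \<open>u0 \<noteq> v0\<close>] by blast
      qed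
      then have "u = u0 \<and> v = v0 \<or> u = v0 \<and> v = u0" by (simp add: doubleton_eq_iff)
      then show ?thesis using uv(4) uv0(4) eps by auto
    qed
    have lin: "pos u0 y - pos v0 y = eps + (al u0 - al v0) * (y - x)" for y
      using uv0(4) unfolding pos_def by (simp add: algebra_simps)
    show False
    proof (cases "al u0 < al v0")
      case True
      show False
      proof (rule ident_side[OF x _ AJ(1-5) id strict, of "{x<..}"])
        show "\<forall>u\<in>E. \<forall>v\<in>E. al u \<noteq> al v \<longrightarrow> pos u x - pos v x = eps \<longrightarrow>
            eventually (\<lambda>y. pos u y - pos v y \<le> eps) (at x within {x<..})"
        proof (intro ballI impI)
          fix u v assume uv: "u \<in> E" "v \<in> E" "al u \<noteq> al v" "pos u x - pos v x = eps"
          have e: "u = u0" "v = v0" using uniq[OF uv] by auto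
          show "eventually (\<lambda>y. pos u y - pos v y \<le> eps) (at x within {x<..})"
            using eventually_at_right_less[of x]
          proof (rule eventually_mono)
            fix y :: real assume "x < y"
            then have "(al u0 - al v0) * (y - x) \<le> 0" using True by (simp add: mult_nonpos_nonneg)
            then show "pos u y - pos v y \<le> eps" using lin[of y] e by simp
          qed
        qed
      qed simp
    next
      case False
      then have gt: "al u0 > al v0" using uv0(3) by simp
      show False
      proof (rule ident_side[OF x _ AJ(1-5) id strict, of "{..<x}"])
        show "\<forall>u\<in>E. \<forall>v\<in>E. al u \<noteq> al v \<longrightarrow> pos u x - pos v x = eps \<longrightarrow>
            eventually (\<lambda>y. pos u y - pos v y \<le> eps) (at x within {..<x})"
        proof (intro ballI impI)
          fix u v assume uv: "u \<in> E" "v \<in> E" "al u \<noteq> al v" "pos u x - pos v x = eps"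
          have e: "u = u0" "v = v0" using uniq[OF uv] by auto
          have ev: "eventually (\<lambda>y. y \<in> {a<..<x}) (at_left x)" using x by (intro eventually_at_left_real) simp
          show "eventually (\<lambda>y. pos u y - pos v y \<le> eps) (at x within {..<x})"
            using ev
          proof (rule eventually_mono)
            fix y :: real assume "y \<in> {a<..<x}"
            then have "(al u0 - al v0) * (y - x) \<le> 0" using gt by (simp add: mult_nonneg_nonpos)
            then show "pos u y - pos v y \<le> eps" using lin[of y] e by simp
          qed
        qed
      qed simp
    qed
  qed
qed

end



context seg begin

lemma card_fd_partners:
  assumes x: "x \<in> {a..b}"
  shows "card {q\<in>E. pos q x = Ic x + f \<or> pos q x = Ic x - f} \<le> 4"
proof -
  have eq: "{q\<in>E. pos q x = Ic x + f \<or> pos q x = Ic x - f} = {q\<in>E. pos q x = Ic x + f} \<union> {q\<in>E. pos q x = Ic x - f}" by auto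
  have "card ({q\<in>E. pos q x = Ic x + f} \<union> {q\<in>E. pos q x = Ic x - f}) \<le> card {q\<in>E. pos q x = Ic x + f} + card {q\<in>E. pos q x = Ic x - f}"
    by (rule card_Un_le)
  moreover have "card {q\<in>E. pos q x = Ic x + f} \<le> 2" "card {q\<in>E. pos q x = Ic x - f} \<le> 2" using card_le2[OF x] by auto
  ultimately show ?thesis unfolding eq by linarith
qed

definition "Bend = {(x, s, p). (x, s, p) \<in> B \<and> (x = a \<or> x = b)}"
definition "Bc = {(x, s, p). (x, s, p) \<in> B \<and> al s \<noteq> al p \<and> pos s x = pos p x}"
definition "B2 = {(x, s, p). (x, s, p) \<in> B \<and> x \<in> {a<..<b} \<and> pos s x \<noteq> pos p x}"
definition "Bi = {(x, s, p). (x, s, p) \<in> B \<and> x \<in> {a<..<b} \<and> al s = al p \<and> be s = be p}"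

lemma cover: "B \<subseteq> Bend \<union> Bc \<union> Bi \<union> B2"
proof
  fix t assume t: "t \<in> B"
  obtain x s p where tt: "t = (x, s, p)" by (cases t) auto
  have xab: "x \<in> {a..b}" using B_E t tt by blast
  show "t \<in> Bend \<union> Bc \<union> Bi \<union> B2"
  proof (cases "x = a \<or> x = b")
    case True then show ?thesis using t tt unfolding Bend_def by auto
  next
    case False
    then have x: "x \<in> {a<..<b}" using xab by auto
    show ?thesis
    proof (cases "pos s x = pos p x")
      case False then show ?thesis using t tt x unfolding B2_def by auto
    next
      case True
      show ?thesis
      proof (cases "al s = al p")
        case False then show ?thesis using t tt True unfolding Bc_def by auto
      next
        case ae: True
        then have "be s = be p" using True unfolding pos_def by simp
        then show ?thesis using t tt x ae unfolding Bi_def by auto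
      qed
    qed
  qed
qed

lemma Bend_card: "card Bend \<le> 8 * n"
proof -
  define P where "P x s = {q\<in>E. pos q x = Ic x + fd s x \<or> pos q x = Ic x - fd s x}" for x s
  have sub: "Bend \<subseteq> (\<Union>x\<in>{a, b}. \<Union>s\<in>E. {x} \<times> ({s} \<times> P x s))"
  proof
    fix t assume t: "t \<in> Bend"
    obtain x s p where tt: "t = (x, s, p)" by (cases t) auto
    have tB: "(x, s, p) \<in> B" "x = a \<or> x = b" using t tt unfolding Bend_def by auto
    have h: "s \<in> E" "p \<in> E" "fd s x = fd p x" using B_E[OF tB(1)] by auto
    have "p \<in> P x s" unfolding P_def using h unfolding fd_def by (auto simp: abs_if split: if_splits)
    then show "t \<in> (\<Union>x\<in>{a, b}. \<Union>s\<in>E. {x} \<times> ({s} \<times> P x s))" using tt tB(2) h by auto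
  qed
  have cP: "card ({x} \<times> ({s} \<times> P x s)) \<le> 4" if "x \<in> {a, b}" for x s
  proof -
    have x: "x \<in> {a..b}" using that ab by auto
    have "card ({x} \<times> ({s} \<times> P x s)) = card (P x s)" by (simp add: card_cartesian_product)
    also have "\<dots> \<le> 4" unfolding P_def by (rule card_fd_partners[OF x])
    finally show ?thesis .
  qed
  have "card Bend \<le> card (\<Union>x\<in>{a, b}. \<Union>s\<in>E. {x} \<times> ({s} \<times> P x s))"
    by (rule card_mono[OF _ sub]) (use finE in \<open>auto simp: P_def\<close>)
  also have "\<dots> \<le> (\<Sum>x\<in>{a, b}. card (\<Union>s\<in>E. {x} \<times> ({s} \<times> P x s)))" by (rule card_UN_le) simp
  also have "\<dots> \<le> (\<Sum>x\<in>{a, b}. (\<Sum>s\<in>E. card ({x} \<times> ({s} \<times> P x s))))"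
    by (intro sum_mono card_UN_le finE)
  also have "\<dots> \<le> (\<Sum>x\<in>{a, b}. (\<Sum>s\<in>E. 4))"
    by (intro sum_mono cP)
  also have "\<dots> \<le> 2 * (4 * n)" using cardE by (simp add: card_insert_if)
  finally show ?thesis by simp
qed

lemma Bc_card: "card Bc \<le> n^2"
proof -
  have inj: "inj_on snd Bc"
  proof (rule inj_onI)
    fix t t' assume t: "t \<in> Bc" and t': "t' \<in> Bc" and e: "snd t = snd t'"
    obtain x s p where tt: "t = (x, s, p)" by (cases t) auto
    obtain x' s' p' where tt': "t' = (x', s', p')" by (cases t') auto
    have h: "al s \<noteq> al p" "pos s x = pos p x" using t tt unfolding Bc_def by auto
    have h': "pos s x' = pos p x'" "s' = s" "p' = p" using t' tt' e tt unfolding Bc_def by auto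
    have "x = (be p - be s) / (al s - al p)" using h unfolding pos_def by (simp add: field_simps)
    moreover have "x' = (be p - be s) / (al s - al p)" using h h' unfolding pos_def by (simp add: field_simps)
    ultimately show "t = t'" using tt tt' h' by simp
  qed
  have sub: "snd ` Bc \<subseteq> E \<times> E" unfolding Bc_def using B_E by force
  have "card Bc = card (snd ` Bc)" using card_image[OF inj] by simp
  also have "\<dots> \<le> card (E \<times> E)" using card_mono[OF _ sub] finE by simp
  also have "\<dots> = n^2" using cardE by (simp add: card_cartesian_product power2_eq_square)
  finally show ?thesis .
qed

lemma B2_card: "card B2 \<le> 16 * card Dset"
proof -
  define W where "W x = {q\<in>E. \<exists>s p. (x, s, p) \<in> B \<and> pos s x < pos p x \<and> (q = s \<or> q = p)}" for x
  have sub: "B2 \<subseteq> (\<Union>x\<in>Dset. {x} \<times> (W x \<times> W x))"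
  proof
    fix t assume t: "t \<in> B2"
    obtain x s p where tt: "t = (x, s, p)" by (cases t) auto
    have h: "(x, s, p) \<in> B" "x \<in> {a<..<b}" "pos s x \<noteq> pos p x" using t tt unfolding B2_def by auto
    have sE: "s \<in> E" "p \<in> E" using B_E[OF h(1)] by auto
    show "t \<in> (\<Union>x\<in>Dset. {x} \<times> (W x \<times> W x))"
    proof (cases "pos s x < pos p x")
      case True
      then have "x \<in> Dset" using h unfolding Dset_def by blast
      moreover have "s \<in> W x" "p \<in> W x" unfolding W_def using h(1) True sE by blast+
      ultimately show ?thesis using tt by auto
    next
      case False
      then have lt: "pos p x < pos s x" using h(3) by simp
      have hB: "(x, p, s) \<in> B" using B_sym[OF h(1)] .
      have "x \<in> Dset" using h(2) hB lt unfolding Dset_def by blast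
      moreover have "s \<in> W x" "p \<in> W x" unfolding W_def using hB lt sE by blast+
      ultimately show ?thesis using tt by auto
    qed
  qed
  have cW: "card (W x) \<le> 4" if x: "x \<in> Dset" for x
  proof -
    obtain s0 p0 where sp0: "(x, s0, p0) \<in> B" "pos s0 x < pos p0 x" "x \<in> {a<..<b}" using x unfolding Dset_def by blast
    note g0 = gap[OF sp0(1,2)]
    have xab: "x \<in> {a..b}" using sp0(3) by auto
    have Wsub: "W x \<subseteq> {q\<in>E. pos q x = Ic x + (pos p0 x - Ic x) \<or> pos q x = Ic x - (pos p0 x - Ic x)}"
    proof
      fix q assume "q \<in> W x"
      then obtain s p where q: "q \<in> E" "(x, s, p) \<in> B" "pos s x < pos p x" "q = s \<or> q = p" unfolding W_def by blast
      note g = gap[OF q(2,3)]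
      have sE: "s \<in> E" "p \<in> E" using B_E[OF q(2)] by auto
      have s0E: "s0 \<in> E" "p0 \<in> E" using B_E[OF sp0(1)] by auto
      have c1: "pos s0 x \<le> pos s x \<or> pos p x \<le> pos s0 x" using g(4) s0E(1) by blast
      have c2: "pos s x \<le> pos s0 x \<or> pos p0 x \<le> pos s x" using g0(4) sE(1) by blast
      have c3: "pos p x \<le> pos s0 x \<or> pos p0 x \<le> pos p x" using g0(4) sE(2) by blast
      have c4: "pos p0 x \<le> pos s x \<or> pos p x \<le> pos p0 x" using g(4) s0E(2) by blast
      have "pos s0 x \<le> pos s x" "pos s x \<le> pos s0 x" "pos p0 x \<le> pos p x" "pos p x \<le> pos p0 x"
        using c1 c2 c3 c4 g(1,2) g0(1,2) by linarith+
      then have "pos s x = pos s0 x" "pos p x = pos p0 x" by auto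
      then show "q \<in> {q\<in>E. pos q x = Ic x + (pos p0 x - Ic x) \<or> pos q x = Ic x - (pos p0 x - Ic x)}"
        using q(1,4) g0(3) by auto
    qed
    have "card (W x) \<le> card {q\<in>E. pos q x = Ic x + (pos p0 x - Ic x) \<or> pos q x = Ic x - (pos p0 x - Ic x)}"
      by (rule card_mono[OF _ Wsub]) (simp add: finE)
    then show ?thesis using card_fd_partners[OF xab, of "pos p0 x - Ic x"] by linarith
  qed
  have fW: "finite (W x)" for x unfolding W_def using finE by simp
  have "card B2 \<le> card (\<Union>x\<in>Dset. {x} \<times> (W x \<times> W x))"
    by (rule card_mono[OF _ sub]) (use Dset_fin fW in auto)
  also have "\<dots> \<le> (\<Sum>x\<in>Dset. card ({x} \<times> (W x \<times> W x)))" by (rule card_UN_le[OF Dset_fin])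
  also have "\<dots> \<le> (\<Sum>x\<in>Dset. 16)"
  proof (rule sum_mono)
    fix x assume x: "x \<in> Dset"
    have "card ({x} \<times> (W x \<times> W x)) = card (W x) * card (W x)" by (simp add: card_cartesian_product)
    also have "\<dots> \<le> 4 * 4" using cW[OF x] by (intro mult_le_mono) auto
    finally show "card ({x} \<times> (W x \<times> W x)) \<le> 16" by simp
  qed
  finally show ?thesis by simp
qed

end



context seg begin

lemma Bi_card: "card Bi \<le> card (Bc \<union> B2)"
proof -
  define f :: "real \<times> nat \<times> nat \<Rightarrow> real \<times> nat \<times> nat" where "f t = (case t of (x, s, p) \<Rightarrow> (x, s, SOME q. (x, s, q) \<in> B \<and> \<not> (al q = al s \<and> be q = be s)))" for t
  have fprop: "(x, s, SOME q. (x, s, q) \<in> B \<and> \<not> (al q = al s \<and> be q = be s)) \<in> B \<and>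
      \<not> (al (SOME q. (x, s, q) \<in> B \<and> \<not> (al q = al s \<and> be q = be s)) = al s \<and>
         be (SOME q. (x, s, q) \<in> B \<and> \<not> (al q = al s \<and> be q = be s)) = be s)"
    if t: "(x, s, p) \<in> Bi" for x s p
  proof -
    have h: "(x, s, p) \<in> B" "x \<in> {a<..<b}" "al s = al p" "be s = be p" using t unfolding Bi_def by auto
    have "\<exists>q. (x, s, q) \<in> B \<and> \<not> (al q = al s \<and> be q = be s)" by (rule ident[OF h])
    then show ?thesis by (rule someI_ex)
  qed
  have img: "f ` Bi \<subseteq> Bc \<union> B2"
  proof
    fix u assume "u \<in> f ` Bi"
    then obtain x s p where t: "(x, s, p) \<in> Bi" and u: "u = f (x, s, p)" by auto
    define q where "q = (SOME q. (x, s, q) \<in> B \<and> \<not> (al q = al s \<and> be q = be s))"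
    have uq: "u = (x, s, q)" unfolding u f_def q_def by simp
    have qp: "(x, s, q) \<in> B" "\<not> (al q = al s \<and> be q = be s)" using fprop[OF t] unfolding q_def by auto
    have x: "x \<in> {a<..<b}" using t unfolding Bi_def by auto
    show "u \<in> Bc \<union> B2"
    proof (cases "pos s x = pos q x")
      case True
      have "al s \<noteq> al q"
      proof
        assume "al s = al q"
        then have "be s = be q" using True unfolding pos_def by simp
        then show False using qp(2) \<open>al s = al q\<close> by simp
      qed
      then show ?thesis using uq qp(1) True unfolding Bc_def by auto
    next
      case False
      then show ?thesis using uq qp(1) x unfolding B2_def by auto
    qed
  qed
  have inj: "inj_on f Bi"
  proof (rule inj_onI)
    fix t t' assume t: "t \<in> Bi" and t': "t' \<in> Bi" and e: "f t = f t'"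
    obtain x s p where tt: "t = (x, s, p)" by (cases t) auto
    obtain x' s' p' where tt': "t' = (x', s', p')" by (cases t') auto
    have xs: "x' = x" "s' = s" using e tt tt' unfolding f_def by auto
    have h: "(x, s, p) \<in> B" "al s = al p" "be s = be p" using t tt unfolding Bi_def by auto
    have h': "(x, s, p') \<in> B" "al s = al p'" "be s = be p'" using t' tt' xs unfolding Bi_def by auto
    have hb: "s \<in> E" "p \<in> E" "s \<noteq> p" "x \<in> {a..b}" using B_E[OF h(1)] by auto
    have hb': "p' \<in> E" "s \<noteq> p'" using B_E[OF h'(1)] by auto
    have "p = p'"
    proof (rule ccontr)
      assume ne: "p \<noteq> p'"
      have e1: "pos s x = pos p x" using h unfolding pos_def by simp
      have e2: "pos p x = pos p' x" using h h' unfolding pos_def by simp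
      show False by (rule gp3[OF hb(4) hb(1) hb(2) hb'(1) hb(3) ne hb'(2) e1 e2])
    qed
    then show "t = t'" using tt tt' xs by simp
  qed
  have fin: "finite (Bc \<union> B2)"
  proof -
    have "Bc \<union> B2 \<subseteq> B" unfolding Bc_def B2_def by auto
    then show ?thesis using finB finite_subset by blast
  qed
  show ?thesis using card_inj_on_le[OF inj img fin] .
qed

lemma card_B: "card B \<le> 400 * n^2"
proof (cases "n = 0")
  case True
  then have "B = {}" using B_E unfolding E_def by fastforce
  then show ?thesis by simp
next
  case False
  then have n1: "n \<ge> 1" by simp
  have fins: "finite Bend" "finite Bc" "finite Bi" "finite B2"
    unfolding Bend_def Bc_def Bi_def B2_def using finB by (auto intro: finite_subset[OF _ finB])
  have "card B \<le> card (Bend \<union> Bc \<union> Bi \<union> B2)" by (rule card_mono[OF _ cover]) (use fins in simp)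
  also have "\<dots> \<le> card Bend + card Bc + card Bi + card B2"
  proof -
    have "card (Bend \<union> Bc \<union> Bi \<union> B2) \<le> card (Bend \<union> Bc \<union> Bi) + card B2" by (rule card_Un_le)
    moreover have "card (Bend \<union> Bc \<union> Bi) \<le> card (Bend \<union> Bc) + card Bi" by (rule card_Un_le)
    moreover have "card (Bend \<union> Bc) \<le> card Bend + card Bc" by (rule card_Un_le)
    ultimately show ?thesis by linarith
  qed
  also have "\<dots> \<le> 8 * n + n^2 + (n^2 + 16 * card Dset) + 16 * card Dset"
  proof -
    have "card Bi \<le> card Bc + card B2" using Bi_card card_Un_le[of Bc B2] by linarith
    then show ?thesis using Bend_card Bc_card B2_card by linarith
  qed
  also have "\<dots> \<le> 400 * n^2"
  proof -
    have n2: "n \<le> n^2" "1 \<le> n^2" using n1 by (simp_all add: power2_eq_square)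
    have "card Dset \<le> 12 * n^2" using Dset_card n2 by linarith
    then show ?thesis using n2 by linarith
  qed
  finally show ?thesis .
qed

lemma card_S: "card S \<le> 400 * n^2"
  using card_B cardB by simp

end

theorem mainTheorem6:
  shows "\<exists>C::real. \<forall>(n::nat) (traj::nat \<Rightarrow> real \<Rightarrow> real) (tv::nat \<Rightarrow> real) (tau::nat) (eps::real) (i::nat).
     eps > 0 \<and> time_vertices_ok tv tau \<and> piecewise_linear_traj n traj tv tau \<and>
     general_position n traj tv tau eps \<and> i < tau \<and>
     finite (segment_break_points n traj tv tau eps i) \<longrightarrow>
     real (card (segment_break_points n traj tv tau eps i)) \<le> C * (real n)\<^sup>2"
proof (intro exI[of _ 400] allI impI)
  fix n traj tv tau eps i
  assume H: "eps > 0 \<and> time_vertices_ok tv tau \<and> piecewise_linear_traj n traj tv tau \<and>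
     general_position n traj tv tau eps \<and> i < tau \<and> finite (segment_break_points n traj tv tau eps i)"
  define ab where "ab s = (SOME c. \<forall>x\<in>{tv i..tv (Suc i)}. traj s x = fst c * x + snd c)" for s
  have lin: "traj s x = fst (ab s) * x + snd (ab s)" if s: "s < n" and x: "x \<in> {tv i..tv (Suc i)}" for s x
  proof -
    have "\<exists>a b. \<forall>x\<in>{tv i..tv (Suc i)}. traj s x = a * x + b"
      using H s unfolding piecewise_linear_traj_def entities_def by auto
    then have "\<exists>c. \<forall>x\<in>{tv i..tv (Suc i)}. traj s x = fst c * x + snd c" by auto
    then have "\<forall>x\<in>{tv i..tv (Suc i)}. traj s x = fst (ab s) * x + snd (ab s)" unfolding ab_def by (rule someI_ex)
    then show ?thesis using x by blast
  qed
  interpret seg n traj tv tau eps i "\<lambda>s. fst (ab s)" "\<lambda>s. snd (ab s)"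
    by unfold_locales (use H lin in auto)
  have "card (segment_break_points n traj tv tau eps i) \<le> 400 * n^2" by (rule card_S)
  then have "real (card (segment_break_points n traj tv tau eps i)) \<le> real (400 * n^2)" by (rule of_nat_mono)
  then show "real (card (segment_break_points n traj tv tau eps i)) \<le> 400 * (real n)\<^sup>2" by simp
qed



end
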